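(* Let $r\le s$ be positive integers and $M\cong\mathbb{A}^{rs}$ the space of complex $r\times s$ matrices, with arc space $M_\infty$ acted on by $G_\infty$ where $G=GL_r\times GL_s$. For pre-partitions $\lambda,\mu$ of length at most $r$, let $O_\lambda,O_\mu\subset M_\infty$ be the associated orbits. Then $O_\mu$ is contained in the Zariski closure of $O_\lambda$ if and only if \[ \lambda_{r-i}+\lambda_{r-i+1}+\dots+\lambda_r\ \le\ \mu_{r-i}+\mu_{r-i+1}+\dots+\mu_r \quad\text{for all } i\in\{0,\dots,r-1\}. \] In other words, the map $\lambda\mapsto O_\lambda$ is an order-reversing isomorphism from the set of pre-partitions of length at most $r$ ordered by co-domination onto the set of $G_\infty$-orbits in $M_\infty$ ordered by "$O'\le O$ iff $O'$ is contained in the closure of $O$".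
   Context: For a variety $X$ over $\mathbb{C}$, the arc space $X_\infty$ is the inverse limit of the jet schemes $X_n$ (which represent $A\mapsto\mathrm{Hom}(\mathrm{Spec}\,A[t]/(t^{n+1}),X)$); its $\mathbb{C}$-points for $X=M$ are $r\times s$ matrices with entries in $\mathbb{C}[[t]]$. The group $G=GL_r\times GL_s$ acts on $M$ by $(g,h)\cdot A=gAh^{-1}$, and functoriality gives an action of the group $G_\infty$ (pairs of invertible matrices over $\mathbb{C}[[t]]$) on $M_\infty$. Let $\overline{\mathbb N}=\mathbb N\cup\{\infty\}$ with $\infty>n$ and $\infty+n=\infty$ for all $n$. A pre-partition of length at most $r$ is a sequence $\lambda=(\lambda_1\ge\lambda_2\ge\dots\ge\lambda_r\ge0)$ of elements of $\overline{\mathbb N}$. For such $\lambda$, $\delta_\lambda$ is the $r\times s$ matrix over $\mathbb{C}[[t]]$ whose first $s-r$ columns are zero and whose last $r$ columns form the diagonal matrix $\mathrm{diag}(t^{\lambda_1},\dots,t^{\lambda_r})$, with the convention $t^\infty=0$; $O_\lambda$ is the $G_\infty$-orbit of $\delta_\lambda$. Co-domination: $\lambda\lhd\mu$ iff $\lambda_i+\dots+\lambda_r\le\mu_i+\dots+\mu_r$ for all $i$. *)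

theory Defs
  imports "Jordan_Normal_Form.Matrix" "HOL-Computational_Algebra.Formal_Power_Series"
          "HOL-Library.Extended_Nat"
begin

text \<open>C-points of the arc space M_infty of r x s matrices: r x s matrices over C[[t]].\<close>
definition arc_points :: "nat \<Rightarrow> nat \<Rightarrow> complex fps mat set" where
  "arc_points r s = carrier_mat r s"

definition arc_orbit :: "nat \<Rightarrow> nat \<Rightarrow> complex fps mat \<Rightarrow> complex fps mat set" where
  "arc_orbit r s A = {B. \<exists>g h hinv. g \<in> carrier_mat r r \<and> invertible_mat g \<and>
       h \<in> carrier_mat s s \<and> hinv \<in> carrier_mat s s \<and>
       h * hinv = 1\<^sub>m s \<and> hinv * h = 1\<^sub>m s \<and> B = g * A * hinv}"

text \<open>t^n with the convention t^infty = 0.\<close>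
definition tpow :: "enat \<Rightarrow> complex fps" where
  "tpow n = (case n of enat k \<Rightarrow> fps_X ^ k | \<infinity> \<Rightarrow> 0)"

text \<open>Pre-partition of length at most r, indexed lambda_1,...,lambda_r (zero elsewhere).\<close>
definition prepartition :: "nat \<Rightarrow> (nat \<Rightarrow> enat) \<Rightarrow> bool" where
  "prepartition r lam \<longleftrightarrow> (\<forall>i j. 1 \<le> i \<longrightarrow> i \<le> j \<longrightarrow> j \<le> r \<longrightarrow> lam j \<le> lam i)
      \<and> (\<forall>i. (i = 0 \<or> r < i) \<longrightarrow> lam i = 0)"

text \<open>delta_lambda: first s-r columns zero, last r columns diag(t^lambda_1,...,t^lambda_r)
  (0-based row i, column j).\<close>
definition delta :: "nat \<Rightarrow> nat \<Rightarrow> (nat \<Rightarrow> enat) \<Rightarrow> complex fps mat" where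
  "delta r s lam = mat r s (\<lambda>(i, j). if j = (s - r) + i then tpow (lam (i + 1)) else 0)"

definition arc_coords :: "nat \<Rightarrow> nat \<Rightarrow> complex fps mat \<Rightarrow> (nat \<times> nat \<times> nat) \<Rightarrow> complex" where
  "arc_coords r s A = (\<lambda>(i, j, k). if i < r \<and> j < s then fps_nth (A $$ (i, j)) k else 0)"

text \<open>Polynomial functions in finitely many of the coordinates (the coordinate ring of M_infty).\<close>
inductive_set polyfun :: "(((nat \<times> nat \<times> nat) \<Rightarrow> complex) \<Rightarrow> complex) set" where
  const: "(\<lambda>x. c) \<in> polyfun"
| var: "(\<lambda>x. x v) \<in> polyfun"
| add: "p \<in> polyfun \<Longrightarrow> q \<in> polyfun \<Longrightarrow> (\<lambda>x. p x + q x) \<in> polyfun"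
| mult: "p \<in> polyfun \<Longrightarrow> q \<in> polyfun \<Longrightarrow> (\<lambda>x. p x * q x) \<in> polyfun"

definition zariski_closure :: "nat \<Rightarrow> nat \<Rightarrow> complex fps mat set \<Rightarrow> complex fps mat set" where
  "zariski_closure r s S = {A \<in> arc_points r s. \<forall>p \<in> polyfun.
      (\<forall>B \<in> S. p (arc_coords r s B) = 0) \<longrightarrow> p (arc_coords r s A) = 0}"

end

theory Submission
  imports Defs "Jordan_Normal_Form.Determinant"
begin

definition entry :: "((nat \<times> nat \<times> nat) \<Rightarrow> complex) \<Rightarrow> nat \<Rightarrow> nat \<Rightarrow> complex fps" where
  "entry x i j = Abs_fps (\<lambda>k. x (i,j,k))"

definition PF :: "(((nat \<times> nat \<times> nat) \<Rightarrow> complex) \<Rightarrow> complex fps) \<Rightarrow> bool" where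
  "PF F \<longleftrightarrow> (\<forall>n. (\<lambda>x. fps_nth (F x) n) \<in> polyfun)"

lemma polyfun_sum: "finite I \<Longrightarrow> (\<And>i. i \<in> I \<Longrightarrow> f i \<in> polyfun) \<Longrightarrow> (\<lambda>x. \<Sum>i\<in>I. f i x) \<in> polyfun"
proof (induction I rule: finite_induct)
  case empty then show ?case using polyfun.const[of 0] by simp
next
  case (insert a I) then show ?case by (simp add: polyfun.add)
qed

lemma polyfun_prod: "finite I \<Longrightarrow> (\<And>i. i \<in> I \<Longrightarrow> f i \<in> polyfun) \<Longrightarrow> (\<lambda>x. \<Prod>i\<in>I. f i x) \<in> polyfun"
proof (induction I rule: finite_induct)
  case empty then show ?case using polyfun.const[of 1] by simp
next
  case (insert a I) then show ?case by (simp add: polyfun.mult)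
qed

lemma polyfun_subst: "p \<in> polyfun \<Longrightarrow> (\<And>v. \<sigma> v \<in> polyfun) \<Longrightarrow> (\<lambda>x. p (\<lambda>v. \<sigma> v x)) \<in> polyfun"
  by (induction p rule: polyfun.induct) (auto intro: polyfun.intros)

lemma PF_const: "PF (\<lambda>x. c)"
  unfolding PF_def by (simp add: polyfun.const)

lemma PF_add: "PF F \<Longrightarrow> PF G \<Longrightarrow> PF (\<lambda>x. F x + G x)"
  unfolding PF_def by (simp add: polyfun.add)

lemma PF_mult: "PF F \<Longrightarrow> PF G \<Longrightarrow> PF (\<lambda>x. F x * G x)"
  unfolding PF_def fps_mult_nth
  by (auto intro!: polyfun_sum polyfun.mult)

lemma PF_sum: "finite I \<Longrightarrow> (\<And>i. i \<in> I \<Longrightarrow> PF (f i)) \<Longrightarrow> PF (\<lambda>x. \<Sum>i\<in>I. f i x)"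
proof (induction I rule: finite_induct)
  case empty then show ?case using PF_const[of 0] by simp
next
  case (insert a I) then show ?case by (simp add: PF_add)
qed

lemma PF_prod: "finite I \<Longrightarrow> (\<And>i. i \<in> I \<Longrightarrow> PF (f i)) \<Longrightarrow> PF (\<lambda>x. \<Prod>i\<in>I. f i x)"
proof (induction I rule: finite_induct)
  case empty then show ?case using PF_const[of 1] by simp
next
  case (insert a I) then show ?case by (simp add: PF_mult)
qed

lemma PF_entry: "PF (\<lambda>x. entry x i j)"
  unfolding PF_def entry_def by (simp add: polyfun.var)

lemma coords_entry: "A \<in> carrier_mat r s \<Longrightarrow> i < r \<Longrightarrow> j < s \<Longrightarrow> entry (arc_coords r s A) i j = A $$ (i,j)"
  unfolding entry_def arc_coords_def by (auto intro: fps_ext)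

lemma entry_mult3:
  assumes X: "X \<in> carrier_mat r s" and g: "g \<in> carrier_mat r r" and h: "hinv \<in> carrier_mat s s"
    and i: "i < r" and j: "j < s"
  shows "(g * X * hinv) $$ (i,j) = (\<Sum>b<s. (\<Sum>a<r. g $$ (i,a) * entry (arc_coords r s X) a b) * hinv $$ (b,j))"
proof -
  have "(g * X * hinv) $$ (i,j) = (\<Sum>b\<in>{0..<s}. (g * X) $$ (i,b) * hinv $$ (b,j))"
    using X g h i j by (simp add: scalar_prod_def del: assoc_mult_mat)
  also have "\<dots> = (\<Sum>b<s. (\<Sum>a<r. g $$ (i,a) * entry (arc_coords r s X) a b) * hinv $$ (b,j))"
    using X g h i j by (auto simp: scalar_prod_def coords_entry lessThan_atLeast0 intro!: sum.cong)
  finally show ?thesis .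
qed

lemma closure_invariant:
  assumes A: "A \<in> zariski_closure r s S"
    and g: "g \<in> carrier_mat r r" and h: "hinv \<in> carrier_mat s s"
    and S: "\<And>B. B \<in> S \<Longrightarrow> g * B * hinv \<in> S" and Sc: "S \<subseteq> arc_points r s"
  shows "g * A * hinv \<in> zariski_closure r s S"
proof -
  define F where "F = (\<lambda>i j x. (\<Sum>b<s. (\<Sum>a<r. g $$ (i,a) * entry x a b) * hinv $$ (b,j)))"
  define \<sigma> where "\<sigma> = (\<lambda>(i,j,k) x. if i < r \<and> j < s then fps_nth (F i j x) k else 0)"
  have PFF: "PF (F i j)" for i j unfolding F_def
    by (intro PF_sum PF_mult PF_const PF_entry) auto
  have sig: "\<sigma> v \<in> polyfun" for v
  proof (cases v)
    case (fields a b c) then show ?thesis using PFF polyfun.const[of 0] unfolding \<sigma>_def PF_def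
      by (cases "a < r \<and> b < s") auto
  qed
  have co: "arc_coords r s (g * X * hinv) = (\<lambda>v. \<sigma> v (arc_coords r s X))" if X: "X \<in> carrier_mat r s" for X
  proof
    fix v show "arc_coords r s (g * X * hinv) v = \<sigma> v (arc_coords r s X)"
      using entry_mult3[OF X g h] unfolding \<sigma>_def F_def arc_coords_def
      by (cases v) auto
  qed
  from A have Ac: "A \<in> carrier_mat r s" unfolding zariski_closure_def arc_points_def by auto
  show ?thesis unfolding zariski_closure_def
  proof (intro CollectI conjI ballI impI)
    show "g * A * hinv \<in> arc_points r s" using Ac g h unfolding arc_points_def by auto
    fix p assume p: "p \<in> polyfun" and van: "\<forall>B\<in>S. p (arc_coords r s B) = 0"
    let ?q = "\<lambda>x. p (\<lambda>v. \<sigma> v x)"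
    have q: "?q \<in> polyfun" by (rule polyfun_subst[OF p sig])
    have "\<forall>B\<in>S. ?q (arc_coords r s B) = 0"
    proof
      fix B assume B: "B \<in> S"
      then have "B \<in> carrier_mat r s" using Sc unfolding arc_points_def by auto
      then show "?q (arc_coords r s B) = 0" using van S[OF B] co by metis
    qed
    then have "?q (arc_coords r s A) = 0" using A q unfolding zariski_closure_def by auto
    then show "p (arc_coords r s (g * A * hinv)) = 0" using co[OF Ac] by simp
  qed
qed

lemma closure_sub: "S \<subseteq> arc_points r s \<Longrightarrow> S \<subseteq> zariski_closure r s S"
  unfolding zariski_closure_def by auto

lemma closure_closure: "zariski_closure r s (zariski_closure r s S) \<subseteq> zariski_closure r s S"
  unfolding zariski_closure_def by auto

lemma closure_mono: "S \<subseteq> T \<Longrightarrow> zariski_closure r s S \<subseteq> zariski_closure r s T"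
  unfolding zariski_closure_def by auto

lemma polyfun_tendsto: "p \<in> polyfun \<Longrightarrow> (\<And>v. ((\<lambda>n. X n v) \<longlongrightarrow> x v) F) \<Longrightarrow> ((\<lambda>n. p (X n)) \<longlongrightarrow> p x) F"
  by (induction p rule: polyfun.induct) (auto intro!: tendsto_intros)

lemma closure_limit:
  assumes A: "A \<in> arc_points r s" and F: "F \<noteq> bot"
    and ev: "eventually (\<lambda>n. B n \<in> S) F"
    and lim: "\<And>v. ((\<lambda>n. arc_coords r s (B n) v) \<longlongrightarrow> arc_coords r s A v) F"
  shows "A \<in> zariski_closure r s S"
  unfolding zariski_closure_def
proof (intro CollectI conjI ballI impI A)
  fix p assume p: "p \<in> polyfun" and van: "\<forall>B\<in>S. p (arc_coords r s B) = 0"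
  have t1: "((\<lambda>n. p (arc_coords r s (B n))) \<longlongrightarrow> p (arc_coords r s A)) F"
    by (rule polyfun_tendsto[OF p lim])
  have "eventually (\<lambda>n. p (arc_coords r s (B n)) = 0) F"
    using ev by eventually_elim (use van in auto)
  then have t2: "((\<lambda>n. p (arc_coords r s (B n))) \<longlongrightarrow> 0) F"
    by (rule tendsto_eventually)
  show "p (arc_coords r s A) = 0" using tendsto_unique[OF F t1 t2] .
qed

lemma delta_carrier[simp]: "delta r s f \<in> carrier_mat r s"
  unfolding delta_def by simp

lemma delta_index: "i < r \<Longrightarrow> j < s \<Longrightarrow> delta r s f $$ (i,j) = (if j = s - r + i then tpow (f (i+1)) else 0)"
  unfolding delta_def by simp

lemma delta_cong: "(\<And>i. 1 \<le> i \<Longrightarrow> i \<le> r \<Longrightarrow> f i = g i) \<Longrightarrow> delta r s f = delta r s g"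
  unfolding delta_def by (intro eq_matI) auto

lemma invertible_carrier:
  assumes "g \<in> carrier_mat n n" "invertible_mat g"
  shows "\<exists>G \<in> carrier_mat n n. g * G = 1\<^sub>m n \<and> G * g = 1\<^sub>m n"
proof -
  from assms obtain G where G: "g * G = 1\<^sub>m n" "G * g = 1\<^sub>m (dim_row G)"
    unfolding invertible_mat_def inverts_mat_def by auto
  have "dim_col G = n" using arg_cong[OF G(1), of dim_col] by simp
  moreover have "dim_row G = n" using arg_cong[OF G(2), of dim_col] assms(1) by simp
  ultimately show ?thesis using G by (intro bexI[of _ G]) auto
qed

lemma invertible_intro:
  assumes "g \<in> carrier_mat n n" "G \<in> carrier_mat n n" "g * G = 1\<^sub>m n" "G * g = 1\<^sub>m n"
  shows "invertible_mat g"
  using assms unfolding invertible_mat_def inverts_mat_def square_mat.simps by auto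

lemma orbit_carrier: "A \<in> carrier_mat r s \<Longrightarrow> arc_orbit r s A \<subseteq> arc_points r s"
  unfolding arc_orbit_def arc_points_def by auto

lemma orbit_self: "A \<in> carrier_mat r s \<Longrightarrow> A \<in> arc_orbit r s A"
  unfolding arc_orbit_def
  by (rule CollectI, rule exI[of _ "1\<^sub>m r"], rule exI[of _ "1\<^sub>m s"], rule exI[of _ "1\<^sub>m s"])
     (auto intro: invertible_intro[of _ r "1\<^sub>m r"])

lemma orbit_act:
  assumes A: "A \<in> carrier_mat r s" and B: "B \<in> arc_orbit r s A"
    and g: "g \<in> carrier_mat r r" "invertible_mat g"
    and h: "h \<in> carrier_mat s s" "hinv \<in> carrier_mat s s" "h * hinv = 1\<^sub>m s" "hinv * h = 1\<^sub>m s"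
  shows "g * B * hinv \<in> arc_orbit r s A"
proof -
  from B obtain g' h' hinv' where g': "g' \<in> carrier_mat r r" "invertible_mat g'"
    and h': "h' \<in> carrier_mat s s" "hinv' \<in> carrier_mat s s" "h' * hinv' = 1\<^sub>m s" "hinv' * h' = 1\<^sub>m s"
    and Beq: "B = g' * A * hinv'" unfolding arc_orbit_def by auto
  obtain G where G: "G \<in> carrier_mat r r" "g * G = 1\<^sub>m r" "G * g = 1\<^sub>m r" using invertible_carrier[OF g] by auto
  obtain G' where G': "G' \<in> carrier_mat r r" "g' * G' = 1\<^sub>m r" "G' * g' = 1\<^sub>m r" using invertible_carrier[OF g'] by auto
  have GG: "G' * G \<in> carrier_mat r r" "g * g' \<in> carrier_mat r r" using G G' g g' by auto
  have "(g * g') * (G' * G) = g * (g' * (G' * G))" using g(1) g'(1) GG(1) by (rule assoc_mult_mat)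
  also have "g' * (G' * G) = (g' * G') * G" using g'(1) G'(1) G(1) by (rule assoc_mult_mat[symmetric])
  finally have i1: "(g * g') * (G' * G) = 1\<^sub>m r" using G G' g by simp
  have "(G' * G) * (g * g') = G' * (G * (g * g'))" using G'(1) G(1) GG(2) by (rule assoc_mult_mat)
  also have "G * (g * g') = (G * g) * g'" using G(1) g(1) g'(1) by (rule assoc_mult_mat[symmetric])
  finally have i2: "(G' * G) * (g * g') = 1\<^sub>m r" using G G' g' by simp
  have inv: "invertible_mat (g * g')" using g g' G G' i1 i2 by (intro invertible_intro[of _ r "G' * G"]) auto
  have HH: "hinv' * hinv \<in> carrier_mat s s" "h * h' \<in> carrier_mat s s" using h h' by auto
  have "(h * h') * (hinv' * hinv) = h * (h' * (hinv' * hinv))" using h(1) h'(1) HH(1) by (rule assoc_mult_mat)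
  also have "h' * (hinv' * hinv) = (h' * hinv') * hinv" using h'(1) h'(2) h(2) by (rule assoc_mult_mat[symmetric])
  finally have j1: "(h * h') * (hinv' * hinv) = 1\<^sub>m s" using h h' by simp
  have "(hinv' * hinv) * (h * h') = hinv' * (hinv * (h * h'))" using h'(2) h(2) HH(2) by (rule assoc_mult_mat)
  also have "hinv * (h * h') = (hinv * h) * h'" using h(2) h(1) h'(1) by (rule assoc_mult_mat[symmetric])
  finally have j2: "(hinv' * hinv) * (h * h') = 1\<^sub>m s" using h h' by simp
  have eq: "g * B * hinv = (g * g') * A * (hinv' * hinv)"
  proof -
    have c1: "A * hinv' \<in> carrier_mat r s" "g' * A \<in> carrier_mat r s" "g' * (A * hinv') \<in> carrier_mat r s"
      using A g' h' by auto
    have "g * B * hinv = g * (g' * (A * hinv')) * hinv" unfolding Beq using g' A h' by simp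
    also have "\<dots> = g * ((g' * (A * hinv')) * hinv)" using g(1) c1(3) h(2) by (rule assoc_mult_mat)
    also have "(g' * (A * hinv')) * hinv = g' * ((A * hinv') * hinv)" using g'(1) c1(1) h(2) by (rule assoc_mult_mat)
    also have "(A * hinv') * hinv = A * (hinv' * hinv)" using A h'(2) h(2) by (rule assoc_mult_mat)
    also have "g * (g' * (A * (hinv' * hinv))) = (g * g') * (A * (hinv' * hinv))"
      using g(1) g'(1) HH(1) A by (intro assoc_mult_mat[symmetric]) auto
    also have "\<dots> = (g * g') * A * (hinv' * hinv)" using GG(2) A HH(1) by (rule assoc_mult_mat[symmetric])
    finally show ?thesis .
  qed
  show ?thesis unfolding arc_orbit_def
    apply (rule CollectI, rule exI[of _ "g * g'"], rule exI[of _ "h * h'"], rule exI[of _ "hinv' * hinv"])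
    using inv j1 j2 eq g g' h h' by auto
qed

lemma orbit_closure_act:
  assumes A: "A \<in> carrier_mat r s" and X: "X \<in> zariski_closure r s (arc_orbit r s A)"
    and g: "g \<in> carrier_mat r r" "invertible_mat g"
    and h: "h \<in> carrier_mat s s" "hinv \<in> carrier_mat s s" "h * hinv = 1\<^sub>m s" "hinv * h = 1\<^sub>m s"
  shows "g * X * hinv \<in> zariski_closure r s (arc_orbit r s A)"
  by (rule closure_invariant[OF X g(1) h(2) orbit_act[OF A _ g h] orbit_carrier[OF A]])

lemma orbit_sub_closure:
  assumes A: "A \<in> carrier_mat r s" and D: "D \<in> carrier_mat r s"
    and X: "D \<in> zariski_closure r s (arc_orbit r s A)"
  shows "arc_orbit r s D \<subseteq> zariski_closure r s (arc_orbit r s A)"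
proof
  fix B assume "B \<in> arc_orbit r s D"
  then obtain g h hinv where g: "g \<in> carrier_mat r r" "invertible_mat g"
    and h: "h \<in> carrier_mat s s" "hinv \<in> carrier_mat s s" "h * hinv = 1\<^sub>m s" "hinv * h = 1\<^sub>m s"
    and Beq: "B = g * D * hinv" unfolding arc_orbit_def by auto
  show "B \<in> zariski_closure r s (arc_orbit r s A)"
    unfolding Beq by (rule orbit_closure_act[OF A X g h])
qed

lemma closure_trans:
  assumes A: "A \<in> carrier_mat r s" and D: "D \<in> carrier_mat r s"
    and X: "D \<in> zariski_closure r s (arc_orbit r s A)"
    and Y: "E \<in> zariski_closure r s (arc_orbit r s D)"
  shows "E \<in> zariski_closure r s (arc_orbit r s A)"
  using closure_closure closure_mono[OF orbit_sub_closure[OF A D X]] Y by blast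

lemma closure_lin:
  assumes A: "A \<in> carrier_mat r s"
    and B: "\<And>c. c \<noteq> 0 \<Longrightarrow> B c \<in> S"
    and Bc: "\<And>c. B c \<in> carrier_mat r s"
    and Be: "\<And>c i j. i < r \<Longrightarrow> j < s \<Longrightarrow> B c $$ (i,j) = A $$ (i,j) + fps_const c * E i j"
  shows "A \<in> zariski_closure r s S"
proof (rule closure_limit[where F="at (0::complex)" and B=B])
  show "A \<in> arc_points r s" using A unfolding arc_points_def by auto
  show "at (0::complex) \<noteq> bot" by simp
  show "eventually (\<lambda>c. B c \<in> S) (at 0)" unfolding eventually_at using B by (auto intro: exI[of _ 1])
  fix v :: "nat \<times> nat \<times> nat"
  obtain i j k where v: "v = (i,j,k)" by (cases v) auto
  show "((\<lambda>c. arc_coords r s (B c) v) \<longlongrightarrow> arc_coords r s A v) (at 0)"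
  proof (cases "i < r \<and> j < s")
    case True
    then have "arc_coords r s (B c) v = arc_coords r s A v + c * fps_nth (E i j) k" for c
      using Be[of i j c] unfolding v arc_coords_def by simp
    moreover have "((\<lambda>c. arc_coords r s A v + c * fps_nth (E i j) k) \<longlongrightarrow> arc_coords r s A v + 0 * fps_nth (E i j) k) (at 0)"
      by (intro tendsto_intros)
    ultimately show ?thesis by simp
  next
    case False then show ?thesis unfolding v arc_coords_def by auto
  qed
qed

lemma closure_lin':
  assumes A: "A \<in> carrier_mat r s"
    and B: "\<And>c. c \<noteq> 0 \<Longrightarrow> B c \<in> S"
    and Bc: "\<And>c. B c \<in> carrier_mat r s"
    and Be: "\<And>c i j. c \<noteq> 0 \<Longrightarrow> i < r \<Longrightarrow> j < s \<Longrightarrow> B c $$ (i,j) = A $$ (i,j) + fps_const c * E i j"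
  shows "A \<in> zariski_closure r s S"
proof (rule closure_limit[where F="at (0::complex)" and B=B])
  show "A \<in> arc_points r s" using A unfolding arc_points_def by auto
  show "at (0::complex) \<noteq> bot" by simp
  show "eventually (\<lambda>c. B c \<in> S) (at 0)" unfolding eventually_at using B by (auto intro: exI[of _ 1])
  fix v :: "nat \<times> nat \<times> nat"
  obtain i j k where v: "v = (i,j,k)" by (cases v) auto
  show "((\<lambda>c. arc_coords r s (B c) v) \<longlongrightarrow> arc_coords r s A v) (at 0)"
  proof (cases "i < r \<and> j < s")
    case True
    then have "eventually (\<lambda>c. arc_coords r s A v + c * fps_nth (E i j) k = arc_coords r s (B c) v) (at 0)"
      using Be[of _ i j] unfolding v arc_coords_def eventually_at by (auto intro: exI[of _ 1])
    moreover have "((\<lambda>c. arc_coords r s A v + c * fps_nth (E i j) k) \<longlongrightarrow> arc_coords r s A v + 0 * fps_nth (E i j) k) (at 0)"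
      by (intro tendsto_intros)
    ultimately show ?thesis using tendsto_cong by fastforce
  next
    case False then show ?thesis unfolding v arc_coords_def by auto
  qed
qed

definition T :: "nat \<Rightarrow> nat \<Rightarrow> nat \<Rightarrow> complex fps \<Rightarrow> complex fps mat" where
  "T n p q e = mat n n (\<lambda>(x,y). if x = y then 1 else if x = p \<and> y = q then e else 0)"

lemma T_carrier[simp]: "T n p q e \<in> carrier_mat n n" "dim_row (T n p q e) = n" "dim_col (T n p q e) = n"
  unfolding T_def by auto

lemma T_left:
  assumes "dim_row B = n" "p < n" "q < n" "p \<noteq> q" "x < n" "y < dim_col B"
  shows "(T n p q e * B) $$ (x,y) = B $$ (x,y) + (if x = p then e * B $$ (q,y) else 0)"
proof -
  have "(T n p q e * B) $$ (x,y) = (\<Sum>u\<in>{0..<n}. T n p q e $$ (x,u) * B $$ (u,y))"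
    using assms by (simp add: scalar_prod_def)
  also have "\<dots> = (\<Sum>u\<in>{0..<n}. (if u = x then B $$ (x,y) else 0) + (if u = q then (if x = p then e * B $$ (q,y) else 0) else 0))"
    using assms by (intro sum.cong) (auto simp: T_def)
  also have "\<dots> = B $$ (x,y) + (if x = p then e * B $$ (q,y) else 0)"
    using assms by (simp add: sum.distrib)
  finally show ?thesis .
qed

lemma T_right:
  assumes "dim_col B = n" "p < n" "q < n" "p \<noteq> q" "x < dim_row B" "y < n"
  shows "(B * T n p q e) $$ (x,y) = B $$ (x,y) + (if y = q then B $$ (x,p) * e else 0)"
proof -
  have "(B * T n p q e) $$ (x,y) = (\<Sum>u\<in>{0..<n}. B $$ (x,u) * T n p q e $$ (u,y))"
    using assms by (simp add: scalar_prod_def)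
  also have "\<dots> = (\<Sum>u\<in>{0..<n}. (if u = y then B $$ (x,y) else 0) + (if u = p then (if y = q then B $$ (x,p) * e else 0) else 0))"
    using assms by (intro sum.cong) (auto simp: T_def)
  also have "\<dots> = B $$ (x,y) + (if y = q then B $$ (x,p) * e else 0)"
    using assms by (simp add: sum.distrib)
  finally show ?thesis .
qed

lemma T_inv:
  assumes "p < n" "q < n" "p \<noteq> q"
  shows "T n p q e * T n p q (-e) = 1\<^sub>m n"
proof (rule eq_matI)
  fix i j assume ij: "i < dim_row (1\<^sub>m n)" "j < dim_col (1\<^sub>m n)"
  show "(T n p q e * T n p q (-e)) $$ (i,j) = 1\<^sub>m n $$ (i,j)"
  proof -
    have "(T n p q e * T n p q (-e)) $$ (i,j) = T n p q (-e) $$ (i,j) + (if i = p then e * T n p q (-e) $$ (q,j) else 0)"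
      by (rule T_left) (use assms ij in auto)
    then show ?thesis using assms ij by (auto simp: T_def)
  qed
qed auto

lemma invertible_one: "invertible_mat (1\<^sub>m n :: 'a :: semiring_1 mat)"
  by (rule invertible_intro[of _ n "1\<^sub>m n"]) auto

lemma T_invertible:
  assumes "p < n" "q < n" "p \<noteq> q"
  shows "invertible_mat (T n p q e)"
  using T_inv[OF assms, of e] T_inv[OF assms, of "-e"]
  by (intro invertible_intro[of _ n "T n p q (-e)"]) auto

lemma orbit_T_left:
  assumes A: "A \<in> carrier_mat r s" and B: "B \<in> arc_orbit r s A" and pq: "p < r" "q < r" "p \<noteq> q"
  shows "T r p q e * B \<in> arc_orbit r s A"
proof -
  have Bc: "B \<in> carrier_mat r s" using orbit_carrier[OF A] B unfolding arc_points_def by auto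
  have "T r p q e * B * 1\<^sub>m s \<in> arc_orbit r s A"
    by (rule orbit_act[OF A B, of _ "1\<^sub>m s"]) (use T_invertible[OF pq] in auto)
  then show ?thesis using Bc by simp
qed

lemma orbit_T_right:
  assumes A: "A \<in> carrier_mat r s" and B: "B \<in> arc_orbit r s A" and pq: "p < s" "q < s" "p \<noteq> q"
  shows "B * T s p q e \<in> arc_orbit r s A"
proof -
  have Bc: "B \<in> carrier_mat r s" using orbit_carrier[OF A] B unfolding arc_points_def by auto
  have "1\<^sub>m r * B * T s p q e \<in> arc_orbit r s A"
    by (rule orbit_act[OF A B, of _ "T s p q (-e)"]) (use T_inv[OF pq] T_inv[OF pq, of "-e"] invertible_one in auto)
  then show ?thesis using Bc by simp
qed

lemma T_left_mat:
  assumes "dim_row B = n" "p < n" "q < n" "p \<noteq> q"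
  shows "T n p q e * B = mat n (dim_col B) (\<lambda>(x,y). B $$ (x,y) + (if x = p then e * B $$ (q,y) else 0))"
  by (rule eq_matI) (use assms T_left in auto)

lemma T_right_mat:
  assumes "dim_col B = n" "p < n" "q < n" "p \<noteq> q"
  shows "B * T n p q e = mat (dim_row B) n (\<lambda>(x,y). B $$ (x,y) + (if y = q then B $$ (x,p) * e else 0))"
  by (rule eq_matI) (use assms T_right in auto)

definition Dg :: "nat \<Rightarrow> (nat \<Rightarrow> complex fps) \<Rightarrow> complex fps mat" where
  "Dg n f = mat n n (\<lambda>(x,y). if x = y then f x else 0)"

lemma Dg_left_mat:
  assumes "dim_row B = n"
  shows "Dg n f * B = mat n (dim_col B) (\<lambda>(x,y). f x * B $$ (x,y))"
proof (rule eq_matI)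
  fix x y assume xy: "x < dim_row (mat n (dim_col B) (\<lambda>(x,y). f x * B $$ (x,y)))"
    "y < dim_col (mat n (dim_col B) (\<lambda>(x,y). f x * B $$ (x,y)))"
  have "(Dg n f * B) $$ (x,y) = (\<Sum>u\<in>{0..<n}. Dg n f $$ (x,u) * B $$ (u,y))"
    using assms xy by (simp add: scalar_prod_def Dg_def)
  also have "\<dots> = (\<Sum>u\<in>{0..<n}. if u = x then f x * B $$ (x,y) else 0)"
    using assms xy by (intro sum.cong) (auto simp: Dg_def)
  finally show "(Dg n f * B) $$ (x,y) = mat n (dim_col B) (\<lambda>(x,y). f x * B $$ (x,y)) $$ (x,y)"
    using xy by simp
qed (auto simp: Dg_def assms)

lemma Dg_mult: "Dg n f * Dg n g = Dg n (\<lambda>x. f x * g x)"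
  by (subst Dg_left_mat) (auto simp: Dg_def intro!: eq_matI)

lemma Dg_one: "(\<And>x. x < n \<Longrightarrow> f x = 1) \<Longrightarrow> Dg n f = 1\<^sub>m n"
  by (auto simp: Dg_def intro!: eq_matI)

lemma Dg_invertible:
  assumes "\<And>x. x < n \<Longrightarrow> f x * g x = 1"
  shows "invertible_mat (Dg n f)"
proof (rule invertible_intro[of _ n "Dg n g"])
  show "Dg n f * Dg n g = 1\<^sub>m n" unfolding Dg_mult using assms by (rule Dg_one)
  show "Dg n g * Dg n f = 1\<^sub>m n" unfolding Dg_mult using assms by (intro Dg_one) (auto simp: mult.commute)
qed (auto simp: Dg_def)

lemma delta_dims[simp]: "dim_row (delta r s f) = r" "dim_col (delta r s f) = s"
  unfolding delta_def by auto

lemma tpow_enat: "tpow (enat n) = fps_X ^ n" unfolding tpow_def by simp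
lemma tpow_inf: "tpow \<infinity> = 0" unfolding tpow_def by simp

lemma move_inc:
  assumes p: "1 \<le> p" "p \<le> r" and rs: "r \<le> s"
  shows "delta r s (\<nu>(p := \<nu> p + 1)) \<in> zariski_closure r s (arc_orbit r s (delta r s \<nu>))"
proof (cases "\<nu> p")
  case infinity
  then have "\<nu>(p := \<nu> p + 1) = \<nu>" by auto
  then show ?thesis using closure_sub[OF orbit_carrier] orbit_self by (metis delta_carrier subsetD)
next
  case (enat n)
  define f where "f = (\<lambda>c x. if x = p - 1 then fps_const c + fps_X else (1 :: complex fps))"
  define B where "B = (\<lambda>c. Dg r (f c) * delta r s \<nu>)"
  show ?thesis
  proof (rule closure_lin'[where B=B and E="\<lambda>i j. if i = p - 1 then delta r s \<nu> $$ (i,j) else 0"])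
    show "delta r s (\<nu>(p := \<nu> p + 1)) \<in> carrier_mat r s" by simp
    show "B c \<in> carrier_mat r s" for c unfolding B_def by (rule mult_carrier_mat[of _ r r]) (auto simp: Dg_def)
    fix c :: complex assume c: "c \<noteq> 0"
    have inv: "invertible_mat (Dg r (f c))"
    proof (rule Dg_invertible[where g="\<lambda>x. inverse (f c x)"])
      fix x show "f c x * inverse (f c x) = 1" unfolding f_def using c
        by (auto intro!: inverse_mult_eq_1')
    qed
    have "Dg r (f c) * delta r s \<nu> * 1\<^sub>m s \<in> arc_orbit r s (delta r s \<nu>)"
      by (rule orbit_act[OF delta_carrier orbit_self[OF delta_carrier] _ inv, where h="1\<^sub>m s"]) (auto simp: Dg_def)
    moreover have "Dg r (f c) * delta r s \<nu> \<in> carrier_mat r s" by (rule mult_carrier_mat[of _ r r]) (auto simp: Dg_def)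
    ultimately show "B c \<in> arc_orbit r s (delta r s \<nu>)" unfolding B_def by (metis right_mult_one_mat)
    fix i j assume ij: "i < r" "j < s"
    show "B c $$ (i, j) = delta r s (\<nu>(p := \<nu> p + 1)) $$ (i, j) + fps_const c * (if i = p - 1 then delta r s \<nu> $$ (i,j) else 0)"
      unfolding B_def using ij p enat
      by (subst Dg_left_mat) (auto simp: delta_index f_def tpow_enat algebra_simps one_enat_def)
  qed
qed

lemma move_tr:
  assumes kj: "1 \<le> k" "k < j" "j \<le> r" and rs: "r \<le> s"
    and nk: "\<nu> k = enat (Suc a)" and nj: "\<nu> j = enat b" and ab: "b \<le> a"
  shows "delta r s (\<nu>(k := enat a, j := enat (Suc b))) \<in> zariski_closure r s (arc_orbit r s (delta r s \<nu>))"
proof -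
  define k0 where "k0 = k - 1"
  define j0 where "j0 = j - 1"
  define ck where "ck = s - r + k0"
  define cj where "cj = s - r + j0"
  have idx: "k0 < r" "j0 < r" "k0 \<noteq> j0" "ck < s" "cj < s" "ck \<noteq> cj" "k0 < j0"
    using kj rs unfolding k0_def j0_def ck_def cj_def by auto
  have k0': "k0 + 1 = k" "j0 + 1 = j" using kj unfolding k0_def j0_def by auto
  define D where "D = delta r s \<nu>"
  define Blk where "Blk = (\<lambda>\<alpha> \<beta> \<gamma> \<epsilon>. mat r s (\<lambda>(x,y). if x = k0 then (if y = ck then \<alpha> else if y = cj then \<beta> else 0)
      else if x = j0 then (if y = ck then \<gamma> else if y = cj then \<epsilon> else 0) else D $$ (x,y)))"
  have Blk_dims[simp]: "dim_row (Blk \<alpha> \<beta> \<gamma> \<epsilon>) = r" "dim_col (Blk \<alpha> \<beta> \<gamma> \<epsilon>) = s" for \<alpha> \<beta> \<gamma> \<epsilon>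
    unfolding Blk_def by auto
  have Drow: "D $$ (x, y) = 0" if "x < r" "y < s" "x = k0 \<or> x = j0 \<or> y = ck \<or> y = cj" "\<not> (x = k0 \<and> y = ck)" "\<not> (x = j0 \<and> y = cj)" for x y
    using that idx unfolding D_def ck_def cj_def by (auto simp: delta_index)
  have D0: "D = Blk (fps_X ^ Suc a) 0 0 (fps_X ^ b)"
    unfolding Blk_def D_def using idx nk nj k0'
    by (intro eq_matI) (auto simp: delta_index tpow_enat ck_def cj_def)
  have L1: "T r k0 j0 e * Blk \<alpha> \<beta> \<gamma> \<epsilon> = Blk (\<alpha> + e * \<gamma>) (\<beta> + e * \<epsilon>) \<gamma> \<epsilon>" for e \<alpha> \<beta> \<gamma> \<epsilon>
    using idx by (subst T_left_mat) (auto simp: Blk_def intro!: eq_matI)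
  have L2: "T r j0 k0 e * Blk \<alpha> \<beta> \<gamma> \<epsilon> = Blk \<alpha> \<beta> (\<gamma> + e * \<alpha>) (\<epsilon> + e * \<beta>)" for e \<alpha> \<beta> \<gamma> \<epsilon>
    using idx by (subst T_left_mat) (auto simp: Blk_def intro!: eq_matI)
  have R1: "Blk \<alpha> \<beta> \<gamma> \<epsilon> * T s cj ck e = Blk (\<alpha> + \<beta> * e) \<beta> (\<gamma> + \<epsilon> * e) \<epsilon>" for e \<alpha> \<beta> \<gamma> \<epsilon>
    using idx Drow by (subst T_right_mat) (auto simp: Blk_def intro!: eq_matI)
  define B where "B = (\<lambda>c. T r j0 k0 (fps_X * fps_const (1/c)) * (T r k0 j0 (fps_const c) *
     (T r j0 k0 (fps_const (-1/c)) * (T r k0 j0 (fps_const c) * D))) *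
     T s cj ck (fps_X^(a-b) * fps_const (1/c)))"
  show ?thesis
  proof (rule closure_lin'[where B=B and E="\<lambda>i j. if i = k0 \<and> j = cj then fps_X^b else 0"])
    show "delta r s (\<nu>(k := enat a, j := enat (Suc b))) \<in> carrier_mat r s" by simp
    show "B c \<in> carrier_mat r s" for c unfolding B_def D_def
      by (meson mult_carrier_mat T_carrier(1) delta_carrier)
    fix c :: complex assume c: "c \<noteq> 0"
    have DD: "delta r s \<nu> \<in> carrier_mat r s" by simp
    show "B c \<in> arc_orbit r s (delta r s \<nu>)" unfolding B_def D_def
      by (intro orbit_T_right orbit_T_left orbit_self DD) (use idx in auto)
    have cc: "fps_const c * fps_const (1/c) = 1" using c
      by (simp add: fps_const_mult)
    have pw: "fps_X ^ b * fps_X ^ (a - b) = (fps_X ^ a :: complex fps)" using ab by (simp add: power_add[symmetric])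
    define u where "u = fps_const c"
    define v where "v = fps_const (1/c)"
    have uv: "u * v = 1" using cc unfolding u_def v_def .
    have m1: "fps_const (-1/c) = - v" unfolding v_def by simp
    have vu: "v * u = 1" using uv by (simp add: mult.commute)
    have Blk_eq: "\<alpha> = \<alpha>' \<Longrightarrow> \<beta> = \<beta>' \<Longrightarrow> \<gamma> = \<gamma>' \<Longrightarrow> \<epsilon> = \<epsilon>' \<Longrightarrow> Blk \<alpha> \<beta> \<gamma> \<epsilon> = Blk \<alpha>' \<beta>' \<gamma>' \<epsilon>'"
      for \<alpha> \<beta> \<gamma> \<epsilon> \<alpha>' \<beta>' \<gamma>' \<epsilon>' by simp
    have S1: "T r k0 j0 u * D = Blk (fps_X ^ Suc a) (u * fps_X ^ b) 0 (fps_X ^ b)"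
      unfolding D0 L1 by (rule Blk_eq) simp_all
    have S2: "T r j0 k0 (- v) * Blk (fps_X ^ Suc a) (u * fps_X ^ b) 0 (fps_X ^ b) = Blk (fps_X ^ Suc a) (u * fps_X ^ b) (- v * fps_X ^ Suc a) 0"
      unfolding L2 by (rule Blk_eq) (simp_all add: mult.assoc[symmetric] vu)
    have S3: "T r k0 j0 u * Blk (fps_X ^ Suc a) (u * fps_X ^ b) (- v * fps_X ^ Suc a) 0 = Blk 0 (u * fps_X ^ b) (- v * fps_X ^ Suc a) 0"
      unfolding L1 by (rule Blk_eq) (simp_all add: mult.assoc[symmetric] uv)
    have S4: "T r j0 k0 (fps_X * v) * Blk 0 (u * fps_X ^ b) (- v * fps_X ^ Suc a) 0 = Blk 0 (u * fps_X ^ b) (- v * fps_X ^ Suc a) (fps_X ^ Suc b)"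
    proof (unfold L2, rule Blk_eq)
      have "fps_X * v * (u * fps_X ^ b) = fps_X * (v * u) * fps_X ^ b" by (simp add: mult.assoc)
      then show "0 + fps_X * v * (u * fps_X ^ b) = fps_X ^ Suc b" using vu by simp
    qed simp_all
    have S5: "Blk 0 (u * fps_X ^ b) (- v * fps_X ^ Suc a) (fps_X ^ Suc b) * T s cj ck (fps_X ^ (a - b) * v) = Blk (fps_X ^ a) (u * fps_X ^ b) 0 (fps_X ^ Suc b)"
    proof (unfold R1, rule Blk_eq)
      have "u * fps_X ^ b * (fps_X ^ (a - b) * v) = (u * v) * (fps_X ^ b * fps_X ^ (a - b))" by (simp add: algebra_simps)
      then show "0 + u * fps_X ^ b * (fps_X ^ (a - b) * v) = fps_X ^ a" using uv pw by simp
      have "fps_X ^ Suc b * (fps_X ^ (a - b) * v) = fps_X * (fps_X ^ b * fps_X ^ (a - b)) * v" by (simp add: algebra_simps)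
      also have "\<dots> = fps_X ^ Suc a * v" using pw by simp
      finally show "- v * fps_X ^ Suc a + fps_X ^ Suc b * (fps_X ^ (a - b) * v) = 0" by (simp add: algebra_simps)
    qed simp_all
    have Bc: "B c = Blk (fps_X ^ a) (u * fps_X ^ b) 0 (fps_X ^ Suc b)"
      unfolding B_def m1 u_def[symmetric] v_def[symmetric] S1 S2 S3 S4 S5 ..
    fix i jj assume ij: "i < r" "jj < s"
    show "B c $$ (i, jj) = delta r s (\<nu>(k := enat a, j := enat (Suc b))) $$ (i, jj) + fps_const c * (if i = k0 \<and> jj = cj then fps_X^b else 0)"
    proof -
      have ne: "k \<noteq> j" using kj by simp
      consider "i = k0" | "i = j0" | "i \<noteq> k0" "i \<noteq> j0" by blast
      then show ?thesis
      proof cases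
        case 1
        then have "i + 1 = k" using k0' by simp
        then show ?thesis unfolding Bc using ij idx ne 1
          by (auto simp: Blk_def delta_index tpow_enat ck_def cj_def u_def)
      next
        case 2
        then have "i + 1 = j" using k0' by simp
        then show ?thesis unfolding Bc using ij idx ne 2
          by (auto simp: Blk_def delta_index tpow_enat ck_def cj_def u_def)
      next
        case 3
        then have "i + 1 \<noteq> k" "i + 1 \<noteq> j" using k0' by auto
        then show ?thesis unfolding Bc using ij idx 3
          by (auto simp: Blk_def delta_index D_def)
      qed
    qed
  qed
qed

definition SS :: "nat \<Rightarrow> nat \<Rightarrow> (nat \<Rightarrow> nat) \<Rightarrow> nat" where
  "SS r i x = (\<Sum>k\<in>{i..r}. x k)"

definition srt :: "nat \<Rightarrow> nat \<Rightarrow> (nat \<Rightarrow> nat) \<Rightarrow> bool" where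
  "srt q r x \<longleftrightarrow> (\<forall>i j. q < i \<longrightarrow> i \<le> j \<longrightarrow> j \<le> r \<longrightarrow> x j \<le> x i)"

lemma SS_Suc: "i \<le> r \<Longrightarrow> SS r i x = x i + SS r (Suc i) x"
  unfolding SS_def by (simp add: sum.atLeast_Suc_atMost)

lemma SS_end: "r < i \<Longrightarrow> SS r i x = 0"
  unfolding SS_def by simp

lemma SS_upd_in: "i \<le> p \<Longrightarrow> p \<le> r \<Longrightarrow> SS r i (x(p := v)) + x p = SS r i x + v"
proof -
  assume ip: "i \<le> p" "p \<le> r"
  have fin: "finite {i..r}" and pin: "p \<in> {i..r}" using ip by auto
  have "SS r i (x(p := v)) = v + (\<Sum>k\<in>{i..r} - {p}. x k)"
    unfolding SS_def by (subst sum.remove[OF fin pin]) (auto intro!: sum.cong)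
  moreover have "SS r i x = x p + (\<Sum>k\<in>{i..r} - {p}. x k)"
    unfolding SS_def by (subst sum.remove[OF fin pin]) auto
  ultimately show ?thesis by simp
qed

lemma SS_upd_out: "p < i \<or> r < p \<Longrightarrow> SS r i (x(p := v)) = SS r i x"
  unfolding SS_def by (intro sum.cong) auto

lemma SS_mono_le: "x p \<le> SS r i x" if "i \<le> p" "p \<le> r"
  unfolding SS_def using that by (intro member_le_sum) auto

lemma descent:
  fixes P :: "(nat \<Rightarrow> nat) \<Rightarrow> (nat \<Rightarrow> nat) \<Rightarrow> bool"
  assumes refl: "\<And>x y. (\<And>i. q < i \<Longrightarrow> i \<le> r \<Longrightarrow> x i = y i) \<Longrightarrow> P x y"
    and trans: "\<And>x y z. P x y \<Longrightarrow> P y z \<Longrightarrow> P x z"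
    and inc: "\<And>x p. q < p \<Longrightarrow> p \<le> r \<Longrightarrow> P x (x(p := Suc (x p)))"
    and tr: "\<And>x k j. q < k \<Longrightarrow> k < j \<Longrightarrow> j \<le> r \<Longrightarrow> x j < x k \<Longrightarrow> P x (x(k := x k - 1, j := Suc (x j)))"
    and sa: "srt q r a"
  shows "srt q r b \<Longrightarrow> (\<And>i. q < i \<Longrightarrow> i \<le> r \<Longrightarrow> SS r i a \<le> SS r i b) \<Longrightarrow> P a b"
proof (induction "\<Sum>i\<in>{Suc q..r}. SS r i b" arbitrary: b rule: less_induct)
  case (less b)
  note sb = less.prems(1) and le = less.prems(2)
  let ?I = "{i. q < i \<and> i \<le> r \<and> SS r i a < SS r i b}"
  show ?case
  proof (cases "?I = {}")
    case True
    have "a i = b i" if "q < i" "i \<le> r" for i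
    proof -
      have e1: "SS r i a = SS r i b" using True le[OF that] that by force
      have e2: "SS r (Suc i) a = SS r (Suc i) b"
      proof (cases "Suc i \<le> r")
        case True then show ?thesis using \<open>?I = {}\<close> le[of "Suc i"] that by force
      qed (simp add: SS_end)
      show ?thesis using e1 e2 SS_Suc[OF that(2), of a] SS_Suc[OF that(2), of b] by simp
    qed
    then show ?thesis by (rule refl)
  next
    case False
    have finI: "finite ?I" by (rule finite_subset[of _ "{..r}"]) auto
    define i0 where "i0 = Max ?I"
    have i0I: "i0 \<in> ?I" unfolding i0_def using Max_in[OF finI False] .
    then have i0: "q < i0" "i0 \<le> r" "SS r i0 a < SS r i0 b" by auto
    have F1: "SS r i a = SS r i b" if "i0 < i" "i \<le> r" for i
    proof -
      have "i \<notin> ?I"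
      proof
        assume "i \<in> ?I" then have "i \<le> i0" unfolding i0_def by (rule Max_ge[OF finI])
        with that show False by simp
      qed
      then show ?thesis using le[of i] that i0 by force
    qed
    have F1': "SS r (Suc i0) a = SS r (Suc i0) b"
      using F1[of "Suc i0"] by (cases "Suc i0 \<le> r") (auto simp: SS_end)
    have F2: "a i0 < b i0" using i0 F1' SS_Suc[OF i0(2), of a] SS_Suc[OF i0(2), of b] by simp
    have F3: "a i = b i" if "i0 < i" "i \<le> r" for i
    proof -
      have "SS r (Suc i) a = SS r (Suc i) b" using F1[of "Suc i"] that by (cases "Suc i \<le> r") (auto simp: SS_end)
      then show ?thesis using F1[OF that] SS_Suc[OF that(2), of a] SS_Suc[OF that(2), of b] by simp
    qed
    have F4: "b j < b i0" if "i0 < j" "j \<le> r" for j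
    proof -
      have "b j = a j" using F3 that by simp
      also have "\<dots> \<le> a i0" using sa that i0 unfolding srt_def by auto
      finally show ?thesis using F2 by simp
    qed
    let ?J = "{i. q < i \<and> i < i0 \<and> SS r i a = SS r i b}"
    show ?thesis
    proof (cases "?J = {}")
      case True
      define b' where "b' = b(i0 := b i0 - 1)"
      have strict: "SS r i a < SS r i b" if "q < i" "i \<le> i0" for i
      proof (cases "i = i0")
        case False
        then have "i \<notin> ?J" using True by auto
        then show ?thesis using le[of i] that i0 False by force
      qed (use i0 in auto)
      have sb': "srt q r b'" unfolding srt_def
      proof (intro allI impI)
        fix i j assume ij: "q < i" "i \<le> j" "j \<le> r"
        show "b' j \<le> b' i"
        proof -
          have bij: "b j \<le> b i" using sb ij unfolding srt_def by auto
          show ?thesis using bij ij F4[of j] unfolding b'_def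
            by (cases "j = i0"; cases "i = i0") auto
        qed
      qed
      have SSb': "SS r i b' + 1 = SS r i b" if "i \<le> i0" for i
        using SS_upd_in[OF that i0(2), of b "b i0 - 1"] F2 unfolding b'_def by simp
      have SSb'2: "SS r i b' = SS r i b" if "i0 < i" for i
        using SS_upd_out[of i0 i r b] that unfolding b'_def by simp
      have le': "SS r i a \<le> SS r i b'" if "q < i" "i \<le> r" for i
      proof (cases "i \<le> i0")
        case True then show ?thesis using strict[OF that(1) True] SSb'[OF True] by simp
      qed (use SSb'2 le that in auto)
      have dec: "(\<Sum>i\<in>{Suc q..r}. SS r i b') < (\<Sum>i\<in>{Suc q..r}. SS r i b)"
      proof (rule sum_strict_mono_ex1)
        show "\<forall>i\<in>{Suc q..r}. SS r i b' \<le> SS r i b"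
          using SSb' SSb'2 by (metis le_add1 not_le_imp_less order_refl)
        show "\<exists>i\<in>{Suc q..r}. SS r i b' < SS r i b"
          using SSb'[of i0] i0 by (intro bexI[of _ i0]) auto
      qed simp
      have "P a b'" by (rule less.hyps[OF dec sb' le'])
      moreover have "P b' b"
      proof -
        have "b'(i0 := Suc (b' i0)) = b" unfolding b'_def using F2 by auto
        then show ?thesis using inc[OF i0(1) i0(2), of b'] by simp
      qed
      ultimately show ?thesis by (rule trans)
    next
      case False
      have finJ: "finite ?J" by (rule finite_subset[of _ "{..i0}"]) auto
      define i1 where "i1 = Max ?J"
      have i1J: "i1 \<in> ?J" unfolding i1_def using Max_in[OF finJ False] .
      then have i1: "q < i1" "i1 < i0" "SS r i1 a = SS r i1 b" by auto
      have G1: "SS r i a < SS r i b" if "i1 < i" "i \<le> i0" for i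
      proof (cases "i = i0")
        case False
        have "i \<notin> ?J"
        proof
          assume "i \<in> ?J" then have "i \<le> i1" unfolding i1_def by (rule Max_ge[OF finJ])
          with that show False by simp
        qed
        then show ?thesis using le[of i] that i0 i1 False by force
      qed (use i0 in auto)
      have G2: "b i1 < a i1"
        using G1[of "Suc i1"] i1 i0 SS_Suc[of i1 r a] SS_Suc[of i1 r b] by auto
      have G3: "b i1 < b i" if "q < i" "i < i1" for i
      proof -
        have p: "i1 - 1 < i1" "q < i1 - 1" "i \<le> i1 - 1" using that by auto
        have sbi: "b (i1 - 1) \<le> b i" using sb p that i1 i0 unfolding srt_def by auto
        have "b i1 < b (i1 - 1)"
        proof (rule ccontr)
          assume "\<not> b i1 < b (i1 - 1)"
          then have eq: "b (i1 - 1) \<le> b i1" by simp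
          have sa1: "a i1 \<le> a (i1 - 1)" using sa p i1 i0 unfolding srt_def by auto
          have s1: "SS r (i1 - 1) a = a (i1 - 1) + SS r i1 a" using SS_Suc[of "i1 - 1" r a] p i1 i0 by simp
          have s2: "SS r (i1 - 1) b = b (i1 - 1) + SS r i1 b" using SS_Suc[of "i1 - 1" r b] p i1 i0 by simp
          have "SS r (i1 - 1) b < SS r (i1 - 1) a" using s1 s2 eq sa1 G2 i1 by simp
          moreover have "SS r (i1 - 1) a \<le> SS r (i1 - 1) b" using le[of "i1 - 1"] p i1 i0 by simp
          ultimately show False by simp
        qed
        then show ?thesis using sbi by simp
      qed
      define b' where "b' = b(i1 := Suc (b i1), i0 := b i0 - 1)"
      have bi0: "b i0 \<le> b i1" using sb i1 i0 unfolding srt_def by auto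
      have sb': "srt q r b'" unfolding srt_def
      proof (intro allI impI)
        fix i j assume ij: "q < i" "i \<le> j" "j \<le> r"
        have bij: "b j \<le> b i" using sb ij unfolding srt_def by auto
        show "b' j \<le> b' i"
        proof (cases "j = i0")
          case True
          then show ?thesis using ij bij i1 unfolding b'_def by auto
        next
          case jn: False
          show ?thesis
          proof (cases "i = i0")
            case True then show ?thesis using F4[of j] ij jn i1 unfolding b'_def by auto
          next
            case inn: False
            show ?thesis
            proof (cases "j = i1")
              case True
              then show ?thesis using G3[of i] ij inn i1 unfolding b'_def
                by (cases "i = i1") auto
            next
              case False
              then show ?thesis using ij inn jn bij unfolding b'_def
                by (cases "i = i1") auto
            qed
          qed
        qed
      qed
      define b1 where "b1 = b(i1 := Suc (b i1))"
      have b'b1: "b' = b1(i0 := b i0 - 1)" unfolding b'_def b1_def by simp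
      have b1i0: "b1 i0 = b i0" unfolding b1_def using i1 by simp
      have SSb1: "SS r i b1 = SS r i b + (if i \<le> i1 then 1 else 0)" if "i \<le> r" for i
      proof (cases "i \<le> i1")
        case True then show ?thesis using SS_upd_in[OF True, of r b "Suc (b i1)"] i1 i0 unfolding b1_def by simp
      next
        case False then show ?thesis using SS_upd_out[of i1 i r b] unfolding b1_def by simp
      qed
      have SSb': "SS r i b' = SS r i b + (if i \<le> i1 then 1 else 0) - (if i \<le> i0 then 1 else 0)" if "i \<le> r" for i
      proof (cases "i \<le> i0")
        case True
        have "SS r i b' + b1 i0 = SS r i b1 + (b i0 - 1)" unfolding b'b1 by (rule SS_upd_in[OF True i0(2)])
        then show ?thesis using SSb1[OF that] b1i0 F2 True by simp
      next
        case False then show ?thesis using SS_upd_out[of i0 i r b1] SSb1[OF that] i1 unfolding b'b1 by simp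
      qed
      have le': "SS r i a \<le> SS r i b'" if "q < i" "i \<le> r" for i
        using SSb'[OF that(2)] le[OF that] G1[of i] by (cases "i \<le> i1"; cases "i \<le> i0") auto
      have dec: "(\<Sum>i\<in>{Suc q..r}. SS r i b') < (\<Sum>i\<in>{Suc q..r}. SS r i b)"
      proof (rule sum_strict_mono_ex1)
        show "\<forall>i\<in>{Suc q..r}. SS r i b' \<le> SS r i b"
          using SSb' i1 by (auto split: if_splits)
        show "\<exists>i\<in>{Suc q..r}. SS r i b' < SS r i b"
          using SSb'[of i0] i0 i1 G1[of i0] by (intro bexI[of _ i0]) auto
      qed simp
      have "P a b'" by (rule less.hyps[OF dec sb' le'])
      moreover have "P b' b"
      proof -
        have "b'(i1 := b' i1 - 1, i0 := Suc (b' i0)) = b" unfolding b'_def using F2 i1 by auto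
        moreover have "b' i0 < b' i1" unfolding b'_def using i1 bi0 by auto
        ultimately show ?thesis using tr[of i1 i0 b'] i1 i0 by simp
      qed
      ultimately show ?thesis by (rule trans)
    qed
  qed
qed

lemma sum_enat: "finite A \<Longrightarrow> (\<Sum>k\<in>A. enat (f k)) = enat (\<Sum>k\<in>A. f k)"
  by (induction A rule: finite_induct) (auto simp: zero_enat_def)

lemma sum_inf: "finite A \<Longrightarrow> ((\<Sum>k\<in>A. g k) = (\<infinity>::enat)) \<longleftrightarrow> (\<exists>k\<in>A. g k = \<infinity>)"
  by (induction A rule: finite_induct) (auto simp: plus_eq_infty_iff_enat)

definition EE :: "nat \<Rightarrow> (nat \<Rightarrow> nat) \<Rightarrow> nat \<Rightarrow> enat" where
  "EE q x = (\<lambda>i. if i \<le> q then \<infinity> else enat (x i))"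

lemma reach_fin:
  assumes rs: "r \<le> s" and sa: "srt q r a" and sb: "srt q r b"
    and le: "\<And>i. q < i \<Longrightarrow> i \<le> r \<Longrightarrow> SS r i a \<le> SS r i b"
  shows "delta r s (EE q b) \<in> zariski_closure r s (arc_orbit r s (delta r s (EE q a)))"
proof -
  let ?P = "\<lambda>x y. delta r s (EE q y) \<in> zariski_closure r s (arc_orbit r s (delta r s (EE q x)))"
  show ?thesis
  proof (rule descent[where P="?P", OF _ _ _ _ sa sb le])
    fix x y :: "nat \<Rightarrow> nat" assume "\<And>i. q < i \<Longrightarrow> i \<le> r \<Longrightarrow> x i = y i"
    then have "delta r s (EE q y) = delta r s (EE q x)" by (intro delta_cong) (auto simp: EE_def)
    then show "?P x y" using closure_sub[OF orbit_carrier] orbit_self by (metis delta_carrier subsetD)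
  next
    fix x y z :: "nat \<Rightarrow> nat" assume "?P x y" "?P y z"
    then show "?P x z" by (rule closure_trans[OF delta_carrier delta_carrier])
  next
    fix x :: "nat \<Rightarrow> nat" and p assume p: "q < p" "p \<le> r"
    have "EE q (x(p := Suc (x p))) = (EE q x)(p := EE q x p + 1)"
      using p by (auto simp: EE_def one_enat_def)
    then show "?P x (x(p := Suc (x p)))" using move_inc[of p r s "EE q x"] p rs by simp
  next
    fix x :: "nat \<Rightarrow> nat" and k j assume kj: "q < k" "k < j" "j \<le> r" "x j < x k"
    have "EE q (x(k := x k - 1, j := Suc (x j))) = (EE q x)(k := enat (x k - 1), j := enat (Suc (x j)))"
      using kj by (auto simp: EE_def)
    moreover have "EE q x k = enat (Suc (x k - 1))" "EE q x j = enat (x j)" using kj by (auto simp: EE_def)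
    ultimately show "?P x (x(k := x k - 1, j := Suc (x j)))"
      using move_tr[of k j r s "EE q x" "x k - 1" "x j"] kj rs by simp
  qed
qed

lemma backward:
  assumes r0: "0 < r" and rs: "r \<le> s" and pl: "prepartition r lam" and pm: "prepartition r mu"
    and cond: "\<forall>i \<in> {0..<r}. (\<Sum>k = r - i..r. lam k) \<le> (\<Sum>k = r - i..r. mu k)"
  shows "delta r s mu \<in> zariski_closure r s (arc_orbit r s (delta r s lam))"
proof -
  have cond': "(\<Sum>k = i..r. lam k) \<le> (\<Sum>k = i..r. mu k)" if "1 \<le> i" "i \<le> r" for i
    using cond[rule_format, of "r - i"] that by auto
  have sl: "lam j \<le> lam i" if "1 \<le> i" "i \<le> j" "j \<le> r" for i j
    using pl that unfolding prepartition_def by auto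
  have sm: "mu j \<le> mu i" if "1 \<le> i" "i \<le> j" "j \<le> r" for i j
    using pm that unfolding prepartition_def by auto
  define Q where "Q = {i\<in>{1..r}. lam i = \<infinity>}"
  define q where "q = (if Q = {} then 0 else Max Q)"
  have finQ: "finite Q" unfolding Q_def by auto
  have qr: "q \<le> r"
  proof (cases "Q = {}")
    case False then show ?thesis unfolding q_def using Max_in[OF finQ False] unfolding Q_def by auto
  qed (simp add: q_def)
  have qlam: "lam i = \<infinity> \<longleftrightarrow> i \<le> q" if "1 \<le> i" "i \<le> r" for i
  proof
    assume "lam i = \<infinity>"
    then have "i \<in> Q" unfolding Q_def using that by auto
    then show "i \<le> q" unfolding q_def using Max_ge[OF finQ] by auto
  next
    assume iq: "i \<le> q"
    then have ne: "Q \<noteq> {}" using that unfolding q_def by (auto split: if_splits)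
    then have "q \<in> Q" unfolding q_def using Max_in[OF finQ ne] by simp
    then have "lam q = \<infinity>" "q \<le> r" unfolding Q_def by auto
    then show "lam i = \<infinity>" using sl[of i q] that iq by (metis enat_ord_simps(5) not_less) 
  qed
  have qmu: "mu i = \<infinity>" if "1 \<le> i" "i \<le> q" for i
  proof -
    have q1: "1 \<le> q" "q \<le> r" using that qr by auto
    have "lam q = \<infinity>" using qlam[OF q1] by simp
    then have "(\<Sum>k = q..r. lam k) = \<infinity>" using sum_inf[of "{q..r}" lam] q1 by auto
    then have "(\<Sum>k = q..r. mu k) = \<infinity>" using cond'[OF q1] by (simp add: top_unique[symmetric])
    then obtain k where k: "k \<in> {q..r}" "mu k = \<infinity>" using sum_inf[of "{q..r}" mu] by auto
    then have "mu q = \<infinity>" using sm[of q k] q1 by auto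
    then show ?thesis using sm[of i q] that q1 by auto
  qed
  define a where "a = (\<lambda>k. the_enat (lam k))"
  define fv where "fv = (\<lambda>k. case mu k of enat n \<Rightarrow> n | \<infinity> \<Rightarrow> 0)"
  define N0 where "N0 = SS r (Suc q) a + (\<Sum>k\<in>{1..r}. fv k)"
  define bN where "bN = (\<lambda>N k. case mu k of enat n \<Rightarrow> n | \<infinity> \<Rightarrow> N)"
  have lamfin: "lam k = enat (a k)" if "q < k" "k \<le> r" for k
    using qlam[of k] that unfolding a_def by auto
  have lam_eq: "delta r s lam = delta r s (EE q a)"
    by (rule delta_cong) (use qlam lamfin in \<open>auto simp: EE_def\<close>)
  have reachN: "delta r s (EE q (bN N)) \<in> zariski_closure r s (arc_orbit r s (delta r s lam))" if N: "N0 \<le> N" for N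
  proof -
    have sa: "srt q r a" unfolding srt_def
    proof (intro allI impI)
      fix i j assume ij: "q < i" "i \<le> j" "j \<le> r"
      show "a j \<le> a i" using sl[of i j] lamfin[of i] lamfin[of j] ij by auto
    qed
    have fvN: "fv k \<le> N" if "1 \<le> k" "k \<le> r" for k
    proof -
      have "fv k \<le> (\<Sum>k\<in>{1..r}. fv k)" using that by (intro member_le_sum) auto
      then show ?thesis using N unfolding N0_def by simp
    qed
    have sb: "srt q r (bN N)" unfolding srt_def
    proof (intro allI impI)
      fix i j assume ij: "q < i" "i \<le> j" "j \<le> r"
      have mij: "mu j \<le> mu i" using sm[of i j] ij by auto
      show "bN N j \<le> bN N i"
      proof (cases "mu j")
        case (enat m)
        show ?thesis
        proof (cases "mu i")
          case (enat n) then show ?thesis using \<open>mu j = enat m\<close> mij unfolding bN_def by auto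
        next
          case infinity
          then show ?thesis using \<open>mu j = enat m\<close> fvN[of j] ij unfolding bN_def fv_def by auto
        qed
      next
        case infinity
        then have "mu i = \<infinity>" using mij by auto
        then show ?thesis using infinity unfolding bN_def by auto
      qed
    qed
    have le: "SS r i a \<le> SS r i (bN N)" if "q < i" "i \<le> r" for i
    proof (cases "\<exists>k\<in>{i..r}. mu k = \<infinity>")
      case True
      then obtain k where k: "k \<in> {i..r}" "mu k = \<infinity>" by auto
      have "SS r i a \<le> SS r (Suc q) a" unfolding SS_def using that by (intro sum_mono2) auto
      also have "\<dots> \<le> N" using N unfolding N0_def by simp
      also have "N = bN N k" using k unfolding bN_def by simp
      also have "\<dots> \<le> SS r i (bN N)" using k by (intro SS_mono_le) auto
      finally show ?thesis .
    next
      case False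
      have "enat (SS r i a) = (\<Sum>k = i..r. lam k)"
        unfolding SS_def by (subst sum_enat[symmetric]) (use lamfin that in \<open>auto intro!: sum.cong\<close>)
      also have "\<dots> \<le> (\<Sum>k = i..r. mu k)" using cond'[of i] that by auto
      also have "\<dots> = enat (SS r i (bN N))"
        unfolding SS_def by (subst sum_enat[symmetric]) (use False in \<open>auto simp: bN_def intro!: sum.cong split: enat.splits\<close>)
      finally show ?thesis by simp
    qed
    show ?thesis unfolding lam_eq by (rule reach_fin[OF rs sa sb le])
  qed
  have "delta r s mu \<in> zariski_closure r s (zariski_closure r s (arc_orbit r s (delta r s lam)))"
  proof (rule closure_limit[where F=sequentially and B="\<lambda>N. delta r s (EE q (bN N))"])
    show "delta r s mu \<in> arc_points r s" unfolding arc_points_def by simp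
    show "sequentially \<noteq> bot" by simp
    show "eventually (\<lambda>N. delta r s (EE q (bN N)) \<in> zariski_closure r s (arc_orbit r s (delta r s lam))) sequentially"
      using reachN unfolding eventually_sequentially by blast
    fix v :: "nat \<times> nat \<times> nat"
    obtain i j k where v: "v = (i,j,k)" by (cases v) auto
    have "eventually (\<lambda>N. arc_coords r s (delta r s (EE q (bN N))) v = arc_coords r s (delta r s mu) v) sequentially"
      unfolding eventually_sequentially
    proof (intro exI[of _ "Suc k"] allI impI)
      fix N assume N: "Suc k \<le> N"
      show "arc_coords r s (delta r s (EE q (bN N))) v = arc_coords r s (delta r s mu) v"
      proof (cases "i < r \<and> j < s \<and> j = s - r + i")
        case True
        have "fps_nth (tpow (EE q (bN N) (i+1))) k = fps_nth (tpow (mu (i+1))) k"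
        proof (cases "i + 1 \<le> q")
          case True then show ?thesis using qmu[of "i+1"] by (simp add: EE_def)
        next
          case False
          then show ?thesis using N by (cases "mu (i+1)") (auto simp: EE_def bN_def tpow_def)
        qed
        then show ?thesis using True unfolding v arc_coords_def by (simp add: delta_index)
      next
        case False then show ?thesis unfolding v arc_coords_def by (auto simp: delta_index)
      qed
    qed
    then show "((\<lambda>N. arc_coords r s (delta r s (EE q (bN N))) v) \<longlongrightarrow> arc_coords r s (delta r s mu) v) sequentially"
      by (rule tendsto_eventually)
  qed
  then show ?thesis using closure_closure by blast
qed

definition dv :: "enat \<Rightarrow> complex fps \<Rightarrow> bool" where
  "dv d p = (case d of enat n \<Rightarrow> fps_X ^ n dvd p | \<infinity> \<Rightarrow> p = 0)"

lemma dv_0[simp]: "dv d 0" unfolding dv_def by (cases d) auto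

lemma dv_add: "dv d p \<Longrightarrow> dv d q \<Longrightarrow> dv d (p + q)"
  unfolding dv_def by (cases d) auto

lemma dv_mult_left: "dv d p \<Longrightarrow> dv d (c * p)"
  unfolding dv_def by (cases d) auto

lemma dv_mult: "dv a p \<Longrightarrow> dv b q \<Longrightarrow> dv (a + b) (p * q)"
  unfolding dv_def by (cases a; cases b) (auto simp: power_add intro: mult_dvd_mono)

lemma dv_sum: "finite A \<Longrightarrow> (\<And>i. i \<in> A \<Longrightarrow> dv d (f i)) \<Longrightarrow> dv d (\<Sum>i\<in>A. f i)"
  by (induction A rule: finite_induct) (auto intro: dv_add)

lemma dv_prod: "finite A \<Longrightarrow> (\<And>i. i \<in> A \<Longrightarrow> dv (w i) (f i)) \<Longrightarrow> dv (\<Sum>i\<in>A. w i) (\<Prod>i\<in>A. f i)"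
proof (induction A rule: finite_induct)
  case empty then show ?case unfolding dv_def by (simp add: zero_enat_def)
next
  case (insert a A) then show ?case by (simp add: dv_mult)
qed

lemma dv_mono: "d' \<le> d \<Longrightarrow> dv d p \<Longrightarrow> dv d' p"
  unfolding dv_def by (cases d; cases d') (auto intro: dvd_trans[OF le_imp_power_dvd])

lemma dv_coeff: "dv d p \<Longrightarrow> enat n < d \<Longrightarrow> fps_nth p n = 0"
  unfolding dv_def by (cases d) (auto simp: fps_X_power_mult_nth elim!: dvdE)

lemma dv_tpow: "dv n (tpow n)"
  unfolding dv_def tpow_def by (cases n) auto

lemma dv_det_cols:
  assumes "\<And>x y. x < m \<Longrightarrow> y < m \<Longrightarrow> dv (w y) (F x y)"
  shows "dv (\<Sum>y\<in>{0..<m}. w y) (det (mat m m (\<lambda>(x,y). F x y)))"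
proof -
  have "det (mat m m (\<lambda>(x,y). F x y)) = (\<Sum>p \<in> {p. p permutes {0..<m}}. signof p * (\<Prod>i = 0..<m. mat m m (\<lambda>(x,y). F x y) $$ (i, p i)))"
    by (rule det_def') simp
  also have "dv (\<Sum>y\<in>{0..<m}. w y) \<dots>"
  proof (rule dv_sum)
    show "finite {p. p permutes {0..<m}}" by (simp add: finite_permutations)
    fix p assume "p \<in> {p. p permutes {0..<m}}"
    then have p: "p permutes {0..<m}" by simp
    have "(\<Sum>i\<in>{0..<m}. w (p i)) = (\<Sum>y\<in>{0..<m}. w y)"
      by (rule sum.reindex_bij_betw[OF permutes_imp_bij[OF p]])
    moreover have "dv (\<Sum>i\<in>{0..<m}. w (p i)) (\<Prod>i = 0..<m. mat m m (\<lambda>(x,y). F x y) $$ (i, p i))"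
      by (rule dv_prod) (use assms permutes_in_image[OF p] in auto)
    ultimately show "dv (\<Sum>y\<in>{0..<m}. w y) (signof p * (\<Prod>i = 0..<m. mat m m (\<lambda>(x,y). F x y) $$ (i, p i)))"
      by (simp add: dv_mult_left)
  qed
  finally show ?thesis .
qed

lemma det_expand:
  fixes c :: "nat \<Rightarrow> nat \<Rightarrow> 'a :: comm_ring_1"
  assumes U: "finite U"
  shows "det (mat m m (\<lambda>(x,y). \<Sum>u\<in>U. c x u * B u y)) =
    (\<Sum>\<phi>\<in>{\<phi>. (\<forall>x\<in>{0..<m}. \<phi> x \<in> U) \<and> (\<forall>x. x \<notin> {0..<m} \<longrightarrow> \<phi> x = x)}.
       (\<Prod>x\<in>{0..<m}. c x (\<phi> x)) * det (mat m m (\<lambda>(x,y). B (\<phi> x) y)))"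
proof -
  define a where "a = (\<lambda>x u. c x u \<cdot>\<^sub>v vec m (\<lambda>y. B u y))"
  have a: "a \<in> {0..<m} \<rightarrow> U \<rightarrow> carrier_vec m" unfolding a_def by auto
  have "mat m m (\<lambda>(x,y). \<Sum>u\<in>U. c x u * B u y) = mat\<^sub>r m m (\<lambda>x. finsum_vec TYPE('a) m (a x) U)"
  proof (rule eq_matI)
    fix i j assume ij: "i < dim_row (mat\<^sub>r m m (\<lambda>x. finsum_vec TYPE('a) m (a x) U))" "j < dim_col (mat\<^sub>r m m (\<lambda>x. finsum_vec TYPE('a) m (a x) U))"
    then show "mat m m (\<lambda>(x,y). \<Sum>u\<in>U. c x u * B u y) $$ (i,j) = mat\<^sub>r m m (\<lambda>x. finsum_vec TYPE('a) m (a x) U) $$ (i,j)"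
      using U by (simp add: index_finsum_vec a_def)
  qed auto
  then have "det (mat m m (\<lambda>(x,y). \<Sum>u\<in>U. c x u * B u y)) = det (mat\<^sub>r m m (\<lambda>x. finsum_vec TYPE('a) m (a x) U))" by simp
  also have "\<dots> = (\<Sum>f\<in>{f. (\<forall>i\<in>{0..<m}. f i \<in> U) \<and> (\<forall>i. i \<notin> {0..<m} \<longrightarrow> f i = i)}. det (mat\<^sub>r m m (\<lambda>i. a i (f i))))"
    by (rule det_linear_rows_sum[OF U a])
  also have "\<dots> = (\<Sum>\<phi>\<in>{\<phi>. (\<forall>x\<in>{0..<m}. \<phi> x \<in> U) \<and> (\<forall>x. x \<notin> {0..<m} \<longrightarrow> \<phi> x = x)}.
       (\<Prod>x\<in>{0..<m}. c x (\<phi> x)) * det (mat m m (\<lambda>(x,y). B (\<phi> x) y)))"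
  proof (rule sum.cong[OF refl])
    fix \<phi> assume "\<phi> \<in> {\<phi>. (\<forall>x\<in>{0..<m}. \<phi> x \<in> U) \<and> (\<forall>x. x \<notin> {0..<m} \<longrightarrow> \<phi> x = x)}"
    have "det (mat\<^sub>r m m (\<lambda>i. a i (\<phi> i))) = (\<Prod>x\<in>{0..<m}. c x (\<phi> x)) * det (mat\<^sub>r m m (\<lambda>i. vec m (\<lambda>y. B (\<phi> i) y)))"
      unfolding a_def by (rule det_rows_mul) auto
    also have "mat\<^sub>r m m (\<lambda>i. vec m (\<lambda>y. B (\<phi> i) y)) = mat m m (\<lambda>(x,y). B (\<phi> x) y)"
      by (rule eq_matI) auto
    finally show "det (mat\<^sub>r m m (\<lambda>i. a i (\<phi> i))) = (\<Prod>x\<in>{0..<m}. c x (\<phi> x)) * det (mat m m (\<lambda>(x,y). B (\<phi> x) y))" .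
  qed
  finally show ?thesis .
qed

definition MP :: "nat \<Rightarrow> nat \<Rightarrow> nat \<Rightarrow> enat \<Rightarrow> complex fps mat \<Rightarrow> bool" where
  "MP r s m d A \<longleftrightarrow> (\<forall>f g. (\<forall>x<m. f x < r) \<longrightarrow> (\<forall>y<m. g y < s) \<longrightarrow> dv d (det (mat m m (\<lambda>(x,y). A $$ (f x, g y)))))"

lemma MP_left:
  assumes A: "A \<in> carrier_mat r s" and G: "G \<in> carrier_mat r r" and M: "MP r s m d A"
  shows "MP r s m d (G * A)"
  unfolding MP_def
proof (intro allI impI)
  fix f g assume f: "\<forall>x<m. f x < r" and g: "\<forall>y<m. g y < s"
  have e1: "mat m m (\<lambda>(x,y). (G * A) $$ (f x, g y)) = mat m m (\<lambda>(x,y). \<Sum>u\<in>{0..<r}. G $$ (f x, u) * A $$ (u, g y))"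
  proof (rule eq_matI)
    fix i j assume "i < dim_row (mat m m (\<lambda>(x,y). \<Sum>u\<in>{0..<r}. G $$ (f x, u) * A $$ (u, g y)))"
      "j < dim_col (mat m m (\<lambda>(x,y). \<Sum>u\<in>{0..<r}. G $$ (f x, u) * A $$ (u, g y)))"
    then have ij: "i < m" "j < m" by simp_all
    have fi: "f i < r" and gj: "g j < s" using f g ij by auto
    have "(G * A) $$ (f i, g j) = (\<Sum>u\<in>{0..<r}. G $$ (f i, u) * A $$ (u, g j))"
      using A G fi gj by (simp add: scalar_prod_def)
    then show "mat m m (\<lambda>(x,y). (G * A) $$ (f x, g y)) $$ (i,j) = mat m m (\<lambda>(x,y). \<Sum>u\<in>{0..<r}. G $$ (f x, u) * A $$ (u, g y)) $$ (i,j)"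
      using ij by simp
  qed simp_all
  have e2: "det (mat m m (\<lambda>(x,y). \<Sum>u\<in>{0..<r}. G $$ (f x, u) * A $$ (u, g y))) = (\<Sum>\<phi>\<in>{\<phi>. (\<forall>x\<in>{0..<m}. \<phi> x \<in> {0..<r}) \<and> (\<forall>x. x \<notin> {0..<m} \<longrightarrow> \<phi> x = x)}.
       (\<Prod>x\<in>{0..<m}. G $$ (f x, \<phi> x)) * det (mat m m (\<lambda>(x,y). A $$ (\<phi> x, g y))))"
    by (rule det_expand[where c="\<lambda>x u. G $$ (f x, u)" and B="\<lambda>u y. A $$ (u, g y)"]) simp
  note eq = trans[OF arg_cong[OF e1, of det] e2]
  show "dv d (det (mat m m (\<lambda>(x,y). (G * A) $$ (f x, g y))))"
    unfolding eq
  proof (rule dv_sum)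
    show "finite {\<phi>. (\<forall>x\<in>{0..<m}. \<phi> x \<in> {0..<r}) \<and> (\<forall>x. x \<notin> {0..<m} \<longrightarrow> \<phi> x = x)}"
      by (rule finite_bounded_functions) auto
    fix \<phi> assume "\<phi> \<in> {\<phi>. (\<forall>x\<in>{0..<m}. \<phi> x \<in> {0..<r}) \<and> (\<forall>x. x \<notin> {0..<m} \<longrightarrow> \<phi> x = x)}"
    then have "\<forall>x<m. \<phi> x < r" by auto
    then have "dv d (det (mat m m (\<lambda>(x,y). A $$ (\<phi> x, g y))))" using M g unfolding MP_def by blast
    then show "dv d ((\<Prod>x\<in>{0..<m}. G $$ (f x, \<phi> x)) * det (mat m m (\<lambda>(x,y). A $$ (\<phi> x, g y))))"
      by (rule dv_mult_left)
  qed
qed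

lemma det_mat_transpose: "det (mat m m (\<lambda>(x,y). F y x)) = det (mat m m (\<lambda>(x,y). F x y))"
proof -
  have "mat m m (\<lambda>(x,y). F y x) = transpose_mat (mat m m (\<lambda>(x,y). F x y))" by (rule eq_matI) auto
  then show ?thesis using det_transpose[of "mat m m (\<lambda>(x,y). F x y)" m] by simp
qed


lemma MP_right:
  assumes A: "A \<in> carrier_mat r s" and H: "H \<in> carrier_mat s s" and M: "MP r s m d A"
  shows "MP r s m d (A * H)"
  unfolding MP_def
proof (intro allI impI)
  fix f g assume f: "\<forall>x<m. f x < r" and g: "\<forall>y<m. g y < s"
  have e1: "mat m m (\<lambda>(x,y). (A * H) $$ (f x, g y)) = mat m m (\<lambda>(x,y). \<Sum>u\<in>{0..<s}. H $$ (u, g y) * A $$ (f x, u))"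
  proof (rule eq_matI)
    fix i j assume "i < dim_row (mat m m (\<lambda>(x,y). \<Sum>u\<in>{0..<s}. H $$ (u, g y) * A $$ (f x, u)))"
      "j < dim_col (mat m m (\<lambda>(x,y). \<Sum>u\<in>{0..<s}. H $$ (u, g y) * A $$ (f x, u)))"
    then have ij: "i < m" "j < m" by simp_all
    have fi: "f i < r" and gj: "g j < s" using f g ij by auto
    have "(A * H) $$ (f i, g j) = (\<Sum>u\<in>{0..<s}. H $$ (u, g j) * A $$ (f i, u))"
      using A H fi gj by (simp add: scalar_prod_def mult.commute)
    then show "mat m m (\<lambda>(x,y). (A * H) $$ (f x, g y)) $$ (i,j) = mat m m (\<lambda>(x,y). \<Sum>u\<in>{0..<s}. H $$ (u, g y) * A $$ (f x, u)) $$ (i,j)"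
      using ij by simp
  qed simp_all
  have e2: "det (mat m m (\<lambda>(x,y). \<Sum>u\<in>{0..<s}. H $$ (u, g y) * A $$ (f x, u))) = det (mat m m (\<lambda>(x,y). \<Sum>u\<in>{0..<s}. H $$ (u, g x) * A $$ (f y, u)))"
    by (rule det_mat_transpose[of m "\<lambda>x y. \<Sum>u\<in>{0..<s}. H $$ (u, g y) * A $$ (f x, u)", symmetric])
  have e3: "det (mat m m (\<lambda>(x,y). \<Sum>u\<in>{0..<s}. H $$ (u, g x) * A $$ (f y, u))) = (\<Sum>\<phi>\<in>{\<phi>. (\<forall>x\<in>{0..<m}. \<phi> x \<in> {0..<s}) \<and> (\<forall>x. x \<notin> {0..<m} \<longrightarrow> \<phi> x = x)}.
       (\<Prod>x\<in>{0..<m}. H $$ (\<phi> x, g x)) * det (mat m m (\<lambda>(x,y). A $$ (f y, \<phi> x))))"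
    by (rule det_expand[where c="\<lambda>x u. H $$ (u, g x)" and B="\<lambda>u y. A $$ (f y, u)"]) simp
  note eq = trans[OF trans[OF arg_cong[OF e1, of det] e2] e3]
  show "dv d (det (mat m m (\<lambda>(x,y). (A * H) $$ (f x, g y))))"
    unfolding eq
  proof (rule dv_sum)
    show "finite {\<phi>. (\<forall>x\<in>{0..<m}. \<phi> x \<in> {0..<s}) \<and> (\<forall>x. x \<notin> {0..<m} \<longrightarrow> \<phi> x = x)}"
      by (rule finite_bounded_functions) auto
    fix \<phi> assume "\<phi> \<in> {\<phi>. (\<forall>x\<in>{0..<m}. \<phi> x \<in> {0..<s}) \<and> (\<forall>x. x \<notin> {0..<m} \<longrightarrow> \<phi> x = x)}"
    then have "\<forall>x<m. \<phi> x < s" by auto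
    then have "dv d (det (mat m m (\<lambda>(x,y). A $$ (f x, \<phi> y))))" using M f unfolding MP_def by blast
    moreover have "det (mat m m (\<lambda>(x,y). A $$ (f y, \<phi> x))) = det (mat m m (\<lambda>(x,y). A $$ (f x, \<phi> y)))"
      by (rule det_mat_transpose[of m "\<lambda>x y. A $$ (f x, \<phi> y)"])
    ultimately have "dv d (det (mat m m (\<lambda>(x,y). A $$ (f y, \<phi> x))))" by simp
    then show "dv d ((\<Prod>x\<in>{0..<m}. H $$ (\<phi> x, g x)) * det (mat m m (\<lambda>(x,y). A $$ (f y, \<phi> x))))"
      by (rule dv_mult_left)
  qed
qed

lemma rearr:
  fixes lam :: "nat \<Rightarrow> enat"
  assumes sl: "\<And>i j. 1 \<le> i \<Longrightarrow> i \<le> j \<Longrightarrow> j \<le> R \<Longrightarrow> lam j \<le> lam i"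
  shows "r' \<le> R \<Longrightarrow> K \<subseteq> {1..r'} \<Longrightarrow> card K = m \<Longrightarrow> (\<Sum>k\<in>{r'+1-m..r'}. lam k) \<le> (\<Sum>k\<in>K. lam k)"
proof (induction r' arbitrary: K m)
  case 0 then show ?case by auto
next
  case (Suc r')
  have finK: "finite K" using Suc.prems(2) finite_subset by blast
  show ?case
  proof (cases "Suc r' \<in> K")
    case True
    define K' where "K' = K - {Suc r'}"
    have K': "K' \<subseteq> {1..r'}" "card K' = m - 1" using Suc.prems True finK unfolding K'_def by auto
    have m1: "1 \<le> m" using True finK Suc.prems(3) card_0_eq by fastforce
    have IH: "(\<Sum>k\<in>{r'+1-(m-1)..r'}. lam k) \<le> (\<Sum>k\<in>K'. lam k)" using Suc.IH[OF _ K'] Suc.prems(1) by simp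
    have "(\<Sum>k\<in>K. lam k) = lam (Suc r') + (\<Sum>k\<in>K'. lam k)"
      unfolding K'_def using True finK by (simp add: sum.remove)
    moreover have "(\<Sum>k\<in>{Suc r'+1-m..Suc r'}. lam k) = lam (Suc r') + (\<Sum>k\<in>{r'+1-(m-1)..r'}. lam k)"
    proof -
      have "{Suc r'+1-m..Suc r'} = insert (Suc r') {r'+1-(m-1)..r'}" using m1 by auto
      then show ?thesis by simp
    qed
    ultimately show ?thesis using IH by (simp add: add_left_mono)
  next
    case False
    have K: "K \<subseteq> {1..r'}"
    proof
      fix x assume "x \<in> K"
      then have "x \<in> {1..Suc r'}" "x \<noteq> Suc r'" using Suc.prems(2) False by auto
      then show "x \<in> {1..r'}" by auto
    qed
    have mr: "m \<le> r'" using card_mono[OF _ K] Suc.prems(3) by simp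
    have IH: "(\<Sum>k\<in>{r'+1-m..r'}. lam k) \<le> (\<Sum>k\<in>K. lam k)" using Suc.IH[OF _ K Suc.prems(3)] Suc.prems(1) by simp
    have "(\<Sum>k\<in>{Suc r'+1-m..Suc r'}. lam k) = (\<Sum>k\<in>{r'+1-m..r'}. lam (Suc k))"
      using mr sum.shift_bounds_cl_Suc_ivl[of lam "r'+1-m" r'] by (simp add: Suc_diff_le)
    also have "\<dots> \<le> (\<Sum>k\<in>{r'+1-m..r'}. lam k)"
      by (rule sum_mono) (use sl Suc.prems(1) mr in auto)
    finally show ?thesis using IH by simp
  qed
qed

lemma MP_delta:
  assumes rs: "r \<le> s" and sl: "\<And>i j. 1 \<le> i \<Longrightarrow> i \<le> j \<Longrightarrow> j \<le> r \<Longrightarrow> lam j \<le> lam i"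
    and mr: "m \<le> r"
  shows "MP r s m (\<Sum>k\<in>{r+1-m..r}. lam k) (delta r s lam)"
  unfolding MP_def
proof (intro allI impI)
  fix f g assume f: "\<forall>x<m. f x < r" and g: "\<forall>y<m. g y < s"
  define w where "w = (\<lambda>y. if s - r \<le> g y then lam (g y - (s - r) + 1) else \<infinity>)"
  let ?M = "mat m m (\<lambda>(x,y). delta r s lam $$ (f x, g y))"
  have dvw: "dv (\<Sum>y\<in>{0..<m}. w y) (det ?M)"
  proof (rule dv_det_cols)
    fix x y assume xy: "x < m" "y < m"
    show "dv (w y) (delta r s lam $$ (f x, g y))"
    proof (cases "g y = s - r + f x")
      case True
      then have "w y = lam (f x + 1)" unfolding w_def by auto
      moreover have "f x < r" "g y < s" using f g xy by auto
      ultimately have "delta r s lam $$ (f x, g y) = tpow (lam (f x + 1))"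
        using delta_index[of "f x" r "g y" s lam] True by simp
      then show ?thesis using \<open>w y = lam (f x + 1)\<close> by (simp add: dv_tpow)
    next
      case False then show ?thesis using f g xy by (simp add: delta_index)
    qed
  qed
  show "dv (\<Sum>k\<in>{r+1-m..r}. lam k) (det ?M)"
  proof (cases "\<exists>y<m. g y < s - r")
    case True
    then obtain y where y: "y < m" "g y < s - r" by auto
    have "w y = \<infinity>" using y unfolding w_def by simp
    then have "\<exists>k\<in>{0..<m}. w k = \<infinity>" using y by auto
    then have "(\<Sum>y\<in>{0..<m}. w y) = \<infinity>" using sum_inf[of "{0..<m}" w] by simp
    then show ?thesis using dvw dv_mono[of "\<Sum>k\<in>{r+1-m..r}. lam k" "\<Sum>y\<in>{0..<m}. w y"] by simp
  next
    case False
    then have ge: "s - r \<le> g y" if "y < m" for y using that by auto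
    show ?thesis
    proof (cases "inj_on g {0..<m}")
      case False
      then obtain y1 y2 where yy: "y1 < m" "y2 < m" "y1 \<noteq> y2" "g y1 = g y2" unfolding inj_on_def by auto
      have "col ?M y1 = col ?M y2"
      proof (rule eq_vecI)
        fix i assume "i < dim_vec (col ?M y2)"
        then show "col ?M y1 $ i = col ?M y2 $ i" using yy by simp
      qed simp
      then have "det ?M = 0" using det_identical_columns[of ?M m y1 y2] yy by simp
      then show ?thesis by simp
    next
      case True
      define h where "h = (\<lambda>y. g y - (s - r) + 1)"
      have injh: "inj_on h {0..<m}"
      proof (rule inj_onI)
        fix y1 y2 assume "y1 \<in> {0..<m}" "y2 \<in> {0..<m}" "h y1 = h y2"
        then have "g y1 = g y2" using ge[of y1] ge[of y2] unfolding h_def by auto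
        then show "y1 = y2" using True \<open>y1 \<in> {0..<m}\<close> \<open>y2 \<in> {0..<m}\<close> unfolding inj_on_def by blast
      qed
      have K: "h ` {0..<m} \<subseteq> {1..r}"
      proof
        fix k assume "k \<in> h ` {0..<m}"
        then obtain y where "y < m" "k = h y" by auto
        then show "k \<in> {1..r}" using g ge[of y] rs unfolding h_def by auto
      qed
      have cK: "card (h ` {0..<m}) = m" using card_image[OF injh] by simp
      have "(\<Sum>y\<in>{0..<m}. w y) = (\<Sum>y\<in>{0..<m}. lam (h y))"
        by (rule sum.cong) (use ge in \<open>auto simp: w_def h_def\<close>)
      also have "\<dots> = (\<Sum>k\<in>h ` {0..<m}. lam k)" using sum.reindex[OF injh, of lam] by simp
      finally have "(\<Sum>k\<in>{r+1-m..r}. lam k) \<le> (\<Sum>y\<in>{0..<m}. w y)"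
        using rearr[of r lam r, OF sl le_refl K cK] by simp
      then show ?thesis using dvw by (rule dv_mono)
    qed
  qed
qed

lemma MP_orbit:
  assumes rs: "r \<le> s" and sl: "\<And>i j. 1 \<le> i \<Longrightarrow> i \<le> j \<Longrightarrow> j \<le> r \<Longrightarrow> lam j \<le> lam i"
    and mr: "m \<le> r" and B: "B \<in> arc_orbit r s (delta r s lam)"
  shows "MP r s m (\<Sum>k\<in>{r+1-m..r}. lam k) B"
proof -
  from B obtain G h hinv where G: "G \<in> carrier_mat r r" and hinv: "hinv \<in> carrier_mat s s"
    and Beq: "B = G * delta r s lam * hinv" unfolding arc_orbit_def by auto
  have GD: "G * delta r s lam \<in> carrier_mat r s" using G by (intro mult_carrier_mat[of _ r r]) auto
  show ?thesis unfolding Beq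
    by (rule MP_right[OF GD hinv MP_left[OF delta_carrier G MP_delta[OF rs sl mr]]])
qed

lemma PF_minor: "PF (\<lambda>x. det (mat m m (\<lambda>(a,b). entry x (f a) (g b))))"
proof -
  have eq: "det (mat m m (\<lambda>(a,b). entry x (f a) (g b))) =
     (\<Sum>p\<in>{p. p permutes {0..<m}}. signof p * (\<Prod>i\<in>{0..<m}. entry x (f i) (g (p i))))" for x
  proof -
    have "det (mat m m (\<lambda>(a,b). entry x (f a) (g b))) =
     (\<Sum>p\<in>{p. p permutes {0..<m}}. signof p * (\<Prod>i\<in>{0..<m}. mat m m (\<lambda>(a,b). entry x (f a) (g b)) $$ (i, p i)))"
      by (rule det_def') simp
    also have "\<dots> = (\<Sum>p\<in>{p. p permutes {0..<m}}. signof p * (\<Prod>i\<in>{0..<m}. entry x (f i) (g (p i))))"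
    proof (rule sum.cong[OF refl])
      fix p assume "p \<in> {p. p permutes {0..<m}}"
      then have p: "p permutes {0..<m}" by simp
      show "signof p * (\<Prod>i\<in>{0..<m}. mat m m (\<lambda>(a,b). entry x (f a) (g b)) $$ (i, p i)) =
            signof p * (\<Prod>i\<in>{0..<m}. entry x (f i) (g (p i)))"
        by (rule arg_cong[where f="\<lambda>t. signof p * t"], rule prod.cong[OF refl])
           (use permutes_in_image[OF p] in auto)
    qed
    finally show ?thesis .
  qed
  show ?thesis unfolding eq
    by (intro PF_sum PF_mult PF_const PF_prod PF_entry) (auto simp: finite_permutations)
qed

lemma tpow_add: "tpow (a + b) = tpow a * tpow b"
  unfolding tpow_def by (cases a; cases b) (auto simp: power_add)

lemma tpow_sum: "finite A \<Longrightarrow> (\<Prod>a\<in>A. tpow (\<nu> a)) = tpow (\<Sum>a\<in>A. \<nu> a)"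
proof (induction A rule: finite_induct)
  case empty then show ?case by (simp add: tpow_def zero_enat_def)
next
  case (insert x F) then show ?case by (simp add: tpow_add)
qed

lemma det_Dg: "det (Dg m d) = (\<Prod>a\<in>{0..<m}. d a)"
proof -
  have "det (Dg m d) = prod_list (diag_mat (Dg m d))"
    by (rule det_upper_triangular) (auto simp: Dg_def)
  also have "\<dots> = (\<Prod>a\<in>{0..<m}. d a)" unfolding prod_list_diag_prod by (simp add: Dg_def)
  finally show ?thesis .
qed

lemma forward:
  assumes r0: "0 < r" and rs: "r \<le> s" and pl: "prepartition r lam" and pm: "prepartition r mu"
    and sub: "arc_orbit r s (delta r s mu) \<subseteq> zariski_closure r s (arc_orbit r s (delta r s lam))"
  shows "\<forall>i \<in> {0..<r}. (\<Sum>k = r - i..r. lam k) \<le> (\<Sum>k = r - i..r. mu k)"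
proof (rule ccontr)
  assume "\<not> ?thesis"
  then obtain i where i: "i < r" and lt: "(\<Sum>k = r - i..r. mu k) < (\<Sum>k = r - i..r. lam k)"
    by (auto simp: not_le)
  have sl: "lam j \<le> lam i" if "1 \<le> i" "i \<le> j" "j \<le> r" for i j
    using pl that unfolding prepartition_def by auto
  define m where "m = Suc i"
  have mr: "m \<le> r" and rm: "r + 1 - m = r - i" using i unfolding m_def by auto
  obtain e' where e': "(\<Sum>k = r - i..r. mu k) = enat e'" using lt by (cases "\<Sum>k = r - i..r. mu k") auto
  define f where "f = (\<lambda>a. r - m + a)"
  define g where "g = (\<lambda>b. s - m + b)"
  have fg: "f a < r" "g a < s" if "a < m" for a using that mr rs unfolding f_def g_def by auto
  define p where "p = (\<lambda>x. fps_nth (det (mat m m (\<lambda>(a,b). entry x (f a) (g b)))) e')"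
  have pp: "p \<in> polyfun" using PF_minor[of m f g] unfolding PF_def p_def by blast
  have minor: "det (mat m m (\<lambda>(a,b). entry (arc_coords r s B) (f a) (g b))) = det (mat m m (\<lambda>(a,b). B $$ (f a, g b)))"
    if B: "B \<in> carrier_mat r s" for B
    by (rule arg_cong[where f=det], rule eq_matI) (use fg coords_entry[OF B] in auto)
  have van: "\<forall>B\<in>arc_orbit r s (delta r s lam). p (arc_coords r s B) = 0"
  proof
    fix B assume B: "B \<in> arc_orbit r s (delta r s lam)"
    then have Bc: "B \<in> carrier_mat r s" using orbit_carrier[of "delta r s lam" r s] unfolding arc_points_def by auto
    have "MP r s m (\<Sum>k\<in>{r+1-m..r}. lam k) B" by (rule MP_orbit[OF rs sl mr B])
    then have "dv (\<Sum>k = r - i..r. lam k) (det (mat m m (\<lambda>(a,b). B $$ (f a, g b))))"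
      unfolding MP_def rm using fg by blast
    then show "p (arc_coords r s B) = 0" unfolding p_def minor[OF Bc]
      by (rule dv_coeff) (use lt e' in simp)
  qed
  have "delta r s mu \<in> zariski_closure r s (arc_orbit r s (delta r s lam))"
    using sub orbit_self[OF delta_carrier] by blast
  then have z: "p (arc_coords r s (delta r s mu)) = 0" using pp van unfolding zariski_closure_def by blast
  have "mat m m (\<lambda>(a,b). delta r s mu $$ (f a, g b)) = Dg m (\<lambda>a. tpow (mu (r - i + a)))"
  proof (rule eq_matI)
    fix a b assume ab: "a < dim_row (Dg m (\<lambda>a. tpow (mu (r - i + a))))" "b < dim_col (Dg m (\<lambda>a. tpow (mu (r - i + a))))"
    then have ab': "a < m" "b < m" by (auto simp: Dg_def)
    have "g b = s - r + f a \<longleftrightarrow> a = b" using ab' mr rs unfolding f_def g_def by auto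
    moreover have "f a + 1 = r - i + a" using ab' mr unfolding f_def m_def by auto
    ultimately show "mat m m (\<lambda>(a,b). delta r s mu $$ (f a, g b)) $$ (a,b) = Dg m (\<lambda>a. tpow (mu (r - i + a))) $$ (a,b)"
      using ab' fg[of a] fg[of b] by (auto simp: delta_index Dg_def)
  qed (auto simp: Dg_def)
  then have "det (mat m m (\<lambda>(a,b). delta r s mu $$ (f a, g b))) = tpow (\<Sum>a\<in>{0..<m}. mu (r - i + a))"
    by (simp add: det_Dg tpow_sum)
  also have "(\<Sum>a\<in>{0..<m}. mu (r - i + a)) = (\<Sum>k = r - i..r. mu k)"
    by (rule sum.reindex_bij_witness[where i="\<lambda>k. k - (r - i)" and j="\<lambda>a. r - i + a"]) (use i in \<open>auto simp: m_def\<close>)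
  finally have "det (mat m m (\<lambda>(a,b). delta r s mu $$ (f a, g b))) = fps_X ^ e'" using e' by (simp add: tpow_def)
  then have "p (arc_coords r s (delta r s mu)) = 1" unfolding p_def minor[OF delta_carrier] by simp
  with z show False by simp
qed

theorem theorem4p7:
  fixes r s :: nat and lam mu :: "nat \<Rightarrow> enat"
  assumes "0 < r" and "r \<le> s"
    and "prepartition r lam" and "prepartition r mu"
  shows "arc_orbit r s (delta r s mu) \<subseteq> zariski_closure r s (arc_orbit r s (delta r s lam))
     \<longleftrightarrow> (\<forall>i \<in> {0..<r}. (\<Sum>k = r - i..r. lam k) \<le> (\<Sum>k = r - i..r. mu k))"
proof
  assume "arc_orbit r s (delta r s mu) \<subseteq> zariski_closure r s (arc_orbit r s (delta r s lam))"
  then show "\<forall>i \<in> {0..<r}. (\<Sum>k = r - i..r. lam k) \<le> (\<Sum>k = r - i..r. mu k)"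
    using forward assms by blast
next
  assume "\<forall>i \<in> {0..<r}. (\<Sum>k = r - i..r. lam k) \<le> (\<Sum>k = r - i..r. mu k)"
  then have "delta r s mu \<in> zariski_closure r s (arc_orbit r s (delta r s lam))"
    using backward assms by blast
  then show "arc_orbit r s (delta r s mu) \<subseteq> zariski_closure r s (arc_orbit r s (delta r s lam))"
    by (rule orbit_sub_closure[OF delta_carrier delta_carrier])
qed

end
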